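(* Let $\mathfrak k$ be a Lie algebra over a field $\mathbb K$ with $2\in\mathbb K^\times$. The maps $\alpha_2,\beta_1,\gamma,\alpha_3,\beta_2$ described below are well-defined linear maps and the sequence $$\{0\}\to H^2(\mathfrak k)\xrightarrow{\alpha_2}H^1(\mathfrak k,\mathfrak k^* )\xrightarrow{\beta_1}\mathrm{Sym}^2(\mathfrak k)^{\mathfrak k}\xrightarrow{\gamma}H^3(\mathfrak k)\xrightarrow{\alpha_3}H^2(\mathfrak k,\mathfrak k^* )\xrightarrow{\beta_2}H^1(\mathfrak k,\mathrm{Sym}^2(\mathfrak k))$$ is exact.
   Context: $H^p(\mathfrak k,\mathfrak a)$ denotes Chevalley–Eilenberg cohomology with coefficients in a $\mathfrak k$-module $\mathfrak a$, and $H^p(\mathfrak k)=H^p(\mathfrak k,\mathbb K)$ with trivial module. $\mathfrak k^*$ is the coadjoint module: $(x.\lambda)(y)=-\lambda([x,y])$. $\mathrm{Sym}^2(\mathfrak k)$ is the space of symmetric bilinear forms on $\mathfrak k$ with $(x.\kappa)(y,z)=-\kappa([x,y],z)-\kappa(y,[x,z])$; $\mathrm{Sym}^2(\mathfrak k)^{\mathfrak k}$ is the space of invariant ones. Definitions: $\alpha_p([\omega])=[\tilde\alpha_p\omega]$ with $(\tilde\alpha_p\omega)(x_1,\dots,x_{p-1})(y)=\omega(x_1,\dots,x_{p-1},y)$. With $S:C^1(\mathfrak k,\mathfrak k^* )\to\mathrm{Sym}^2(\mathfrak k)$, $S(\eta)(y,z)=\eta(y)(z)+\eta(z)(y)$: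 $\beta_1([\omega])=S(\omega)$ for $\omega\in Z^1(\mathfrak k,\mathfrak k^* )$, and $\beta_2([\omega])=[x\mapsto S(\omega(x,\cdot))]$ for $\omega\in Z^2(\mathfrak k,\mathfrak k^* )$. $\gamma(\kappa)=[\Gamma(\kappa)]$ with $\Gamma(\kappa)(x,y,z)=\kappa([x,y],z)$. *)

theory Defs
  imports Main "HOL.Vector_Spaces" "HOL-Library.Function_Algebras"
begin

definition lie_algebra :: "('k::field \<Rightarrow> 'v::ab_group_add \<Rightarrow> 'v) \<Rightarrow> ('v \<Rightarrow> 'v \<Rightarrow> 'v) \<Rightarrow> bool" where
  "lie_algebra sV br \<longleftrightarrow> Vector_Spaces.vector_space sV
     \<and> (\<forall>x. Vector_Spaces.linear sV sV (br x)) \<and> (\<forall>y. Vector_Spaces.linear sV sV (\<lambda>x. br x y))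
     \<and> (\<forall>x. br x x = 0)
     \<and> (\<forall>x y z. br x (br y z) + br y (br z x) + br z (br x y) = 0)"

text \<open>A p-cochain with values in a module (ambient type 'm, scalar multiplication sM,
  carrier A) is an alternating p-multilinear map, encoded as a function on argument lists
  which vanishes on lists of length different from p.\<close>

definition cochains :: "('k::field \<Rightarrow> 'v::ab_group_add \<Rightarrow> 'v) \<Rightarrow> ('k \<Rightarrow> 'm \<Rightarrow> 'm) \<Rightarrow> 'm::ab_group_add set
    \<Rightarrow> nat \<Rightarrow> ('v list \<Rightarrow> 'm) set" where
  "cochains sV sM A p = {\<omega>.
      (\<forall>xs. length xs \<noteq> p \<longrightarrow> \<omega> xs = 0)
    \<and> (\<forall>xs. length xs = p \<longrightarrow> \<omega> xs \<in> A)
    \<and> (\<forall>xs i. length xs = p \<and> i < p \<longrightarrow> Vector_Spaces.linear sV sM (\<lambda>y. \<omega> (xs[i := y])))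
    \<and> (\<forall>xs i j. length xs = p \<and> i < j \<and> j < p \<and> xs ! i = xs ! j \<longrightarrow> \<omega> xs = 0)}"

definition del_nth :: "nat \<Rightarrow> 'a list \<Rightarrow> 'a list" where
  "del_nth i xs = take i xs @ drop (Suc i) xs"

definition ce_diff :: "('v \<Rightarrow> 'v \<Rightarrow> 'v) \<Rightarrow> ('k::field \<Rightarrow> 'm \<Rightarrow> 'm) \<Rightarrow> ('v \<Rightarrow> 'm \<Rightarrow> 'm)
    \<Rightarrow> nat \<Rightarrow> ('v list \<Rightarrow> 'm::ab_group_add) \<Rightarrow> 'v list \<Rightarrow> 'm" where
  "ce_diff br sM act p \<omega> xs =
     (if length xs = Suc p then
        (\<Sum>i<Suc p. sM ((-1) ^ i) (act (xs ! i) (\<omega> (del_nth i xs))))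
      + (\<Sum>j<Suc p. \<Sum>i<j. sM ((-1) ^ (i + j))
            (\<omega> (br (xs ! i) (xs ! j) # del_nth i (del_nth j xs))))
      else 0)"

definition cocycles where
  "cocycles sV br sM act A p = {\<omega> \<in> cochains sV sM A p. ce_diff br sM act p \<omega> = 0}"

definition coboundaries where
  "coboundaries sV br sM act A p =
     (if p = 0 then {0} else ce_diff br sM act (p - 1) ` cochains sV sM A (p - 1))"

definition cscale :: "('k \<Rightarrow> 'm \<Rightarrow> 'm) \<Rightarrow> 'k \<Rightarrow> ('v list \<Rightarrow> 'm) \<Rightarrow> 'v list \<Rightarrow> 'm" where
  "cscale sM a \<omega> = (\<lambda>xs. sM a (\<omega> xs))"

definition coset :: "'a::ab_group_add set \<Rightarrow> 'a \<Rightarrow> 'a set" where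
  "coset B x = (\<lambda>b. x + b) ` B"

definition cohomology where
  "cohomology sV br sM act A p =
     coset (coboundaries sV br sM act A p) ` cocycles sV br sM act A p"

definition qmap :: "('a \<Rightarrow> 'b::ab_group_add) \<Rightarrow> 'b set \<Rightarrow> 'a set \<Rightarrow> 'b set" where
  "qmap F B' c = (\<Union>x\<in>c. coset B' (F x))"

definition qadd :: "'a::ab_group_add set \<Rightarrow> 'a set \<Rightarrow> 'a set" where
  "qadd c d = {x + y | x y. x \<in> c \<and> y \<in> d}"

definition qscale :: "('k \<Rightarrow> 'a::ab_group_add \<Rightarrow> 'a) \<Rightarrow> 'a set \<Rightarrow> 'k \<Rightarrow> 'a set \<Rightarrow> 'a set" where
  "qscale s B a c = {s a x + b | x b. x \<in> c \<and> b \<in> B}"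

definition well_defined_linear where
  "well_defined_linear s B H s' B' H' F \<longleftrightarrow>
     (\<forall>c\<in>H. qmap F B' c \<in> H')
   \<and> (\<forall>c\<in>H. \<forall>d\<in>H. qmap F B' (qadd c d) = qadd (qmap F B' c) (qmap F B' d))
   \<and> (\<forall>a. \<forall>c\<in>H. qmap F B' (qscale s B a c) = qscale s' B' a (qmap F B' c))"

definition exact_at where
  "exact_at H1 F B2 H2 G B3 \<longleftrightarrow>
     qmap F B2 ` H1 = {c \<in> H2. qmap G B3 c = coset B3 0}"

definition triv_act :: "'v \<Rightarrow> 'k::field \<Rightarrow> 'k" where
  "triv_act x c = 0"

definition dual_scale :: "'k::field \<Rightarrow> ('v \<Rightarrow> 'k) \<Rightarrow> 'v \<Rightarrow> 'k" where
  "dual_scale a f = (\<lambda>y. a * f y)"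

definition dual_space :: "('k::field \<Rightarrow> 'v::ab_group_add \<Rightarrow> 'v) \<Rightarrow> ('v \<Rightarrow> 'k) set" where
  "dual_space sV = {f. Vector_Spaces.linear sV (*) f}"

definition dual_act :: "('v \<Rightarrow> 'v \<Rightarrow> 'v) \<Rightarrow> 'v \<Rightarrow> ('v \<Rightarrow> 'k::field) \<Rightarrow> 'v \<Rightarrow> 'k" where
  "dual_act br x f = (\<lambda>y. - f (br x y))"

definition sym_scale :: "'k::field \<Rightarrow> ('v \<Rightarrow> 'v \<Rightarrow> 'k) \<Rightarrow> 'v \<Rightarrow> 'v \<Rightarrow> 'k" where
  "sym_scale a f = (\<lambda>y z. a * f y z)"

definition sym2 :: "('k::field \<Rightarrow> 'v::ab_group_add \<Rightarrow> 'v) \<Rightarrow> ('v \<Rightarrow> 'v \<Rightarrow> 'k) set" where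
  "sym2 sV = {\<kappa>. (\<forall>y. Vector_Spaces.linear sV (*) (\<kappa> y)) \<and> (\<forall>z. Vector_Spaces.linear sV (*) (\<lambda>y. \<kappa> y z))
                \<and> (\<forall>y z. \<kappa> y z = \<kappa> z y)}"

definition sym_act :: "('v \<Rightarrow> 'v \<Rightarrow> 'v) \<Rightarrow> 'v \<Rightarrow> ('v \<Rightarrow> 'v \<Rightarrow> 'k::field) \<Rightarrow> 'v \<Rightarrow> 'v \<Rightarrow> 'k" where
  "sym_act br x \<kappa> = (\<lambda>y z. - \<kappa> (br x y) z - \<kappa> y (br x z))"

definition sym2_inv :: "('k::field \<Rightarrow> 'v::ab_group_add \<Rightarrow> 'v) \<Rightarrow> ('v \<Rightarrow> 'v \<Rightarrow> 'v) \<Rightarrow> ('v \<Rightarrow> 'v \<Rightarrow> 'k) set" where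
  "sym2_inv sV br = {\<kappa> \<in> sym2 sV. \<forall>x. sym_act br x \<kappa> = 0}"

definition alpha_til :: "nat \<Rightarrow> ('v list \<Rightarrow> 'k::field) \<Rightarrow> 'v list \<Rightarrow> 'v \<Rightarrow> 'k" where
  "alpha_til p \<omega> xs = (if length xs = p - 1 then (\<lambda>y. \<omega> (xs @ [y])) else 0)"

definition S_map :: "('v list \<Rightarrow> 'v \<Rightarrow> 'k::field) \<Rightarrow> 'v \<Rightarrow> 'v \<Rightarrow> 'k" where
  "S_map \<eta> = (\<lambda>y z. \<eta> [y] z + \<eta> [z] y)"

text \<open>beta~_2 \<omega> = (x \<mapsto> S(\<omega>(x,.))).\<close>
definition beta2_til :: "('v list \<Rightarrow> 'v \<Rightarrow> 'k::field) \<Rightarrow> 'v list \<Rightarrow> 'v \<Rightarrow> 'v \<Rightarrow> 'k" where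
  "beta2_til \<omega> xs = (if length xs = 1 then (\<lambda>y z. \<omega> [xs ! 0, y] z + \<omega> [xs ! 0, z] y) else 0)"

definition Gamma :: "('v \<Rightarrow> 'v \<Rightarrow> 'v) \<Rightarrow> ('v \<Rightarrow> 'v \<Rightarrow> 'k::field) \<Rightarrow> 'v list \<Rightarrow> 'k" where
  "Gamma br \<kappa> xs = (if length xs = 3 then \<kappa> (br (xs ! 0) (xs ! 1)) (xs ! 2) else 0)"

abbreviation "Htriv sV br p \<equiv> cohomology sV br (*) triv_act UNIV p"
abbreviation "Btriv sV br p \<equiv> coboundaries sV br (*) triv_act UNIV p"
abbreviation "Hdual sV br p \<equiv> cohomology sV br dual_scale (dual_act br) (dual_space sV) p"
abbreviation "Bdual sV br p \<equiv> coboundaries sV br dual_scale (dual_act br) (dual_space sV) p"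
abbreviation "Hsym sV br p \<equiv> cohomology sV br sym_scale (sym_act br) (sym2 sV) p"
abbreviation "Bsym sV br p \<equiv> coboundaries sV br sym_scale (sym_act br) (sym2 sV) p"
text \<open>Sym^2(k)^k viewed as a quotient by {0}: its elements are singletons.\<close>
abbreviation "Sinv sV br \<equiv> coset {0} ` sym2_inv sV br"

end

theory Submission
  imports Defs
begin

lemma lin_add: "Vector_Spaces.linear s1 s2 f \<Longrightarrow> f (x + y) = f x + f y"
  by (simp add: linear_iff)
lemma lin_scale: "Vector_Spaces.linear s1 s2 f \<Longrightarrow> f (s1 c x) = s2 c (f x)"
  by (simp add: linear_iff)

lemma vs_K: "Vector_Spaces.vector_space ((*) :: 'k::field \<Rightarrow> 'k \<Rightarrow> 'k)"
  by (simp add: vector_space_def algebra_simps)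
lemma vs_D: "Vector_Spaces.vector_space (dual_scale :: 'k::field \<Rightarrow> ('v \<Rightarrow> 'k) \<Rightarrow> _)"
  by (simp add: vector_space_def dual_scale_def algebra_simps fun_eq_iff)
lemma vs_S: "Vector_Spaces.vector_space (sym_scale :: 'k::field \<Rightarrow> ('v \<Rightarrow> 'v \<Rightarrow> 'k) \<Rightarrow> _)"
  by (simp add: vector_space_def sym_scale_def algebra_simps fun_eq_iff)

locale LA =
  fixes sV :: "'k::field \<Rightarrow> 'v::ab_group_add \<Rightarrow> 'v"
    and br :: "'v \<Rightarrow> 'v \<Rightarrow> 'v"
  assumes la: "lie_algebra sV br"
begin

lemma vsV: "Vector_Spaces.vector_space sV"
  using la by (simp add: lie_algebra_def)

lemma linI: "Vector_Spaces.vector_space s2 \<Longrightarrow> (\<And>x y. f (x + y) = f x + f y) \<Longrightarrow> (\<And>c x. f (sV c x) = s2 c (f x))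
   \<Longrightarrow> Vector_Spaces.linear sV s2 f"
  using vsV by (simp add: linear_iff)

lemma br_add1: "br (x + y) z = br x z + br y z"
  using la unfolding lie_algebra_def by (metis lin_add)
lemma br_add2: "br z (x + y) = br z x + br z y"
  using la unfolding lie_algebra_def by (metis lin_add)
lemma br_scale1: "br (sV c x) z = sV c (br x z)"
  using la unfolding lie_algebra_def by (metis lin_scale)
lemma br_scale2: "br z (sV c x) = sV c (br z x)"
  using la unfolding lie_algebra_def by (metis lin_scale)
lemma br_zero1: "br 0 z = 0"
  by (metis add_cancel_right_right br_add1 add_0)
lemma br_zero2: "br z 0 = 0"
  by (metis add_cancel_right_right br_add2 add_0)
lemma br_neg1: "br (- x) z = - br x z"
  by (metis add_eq_0_iff br_add1 br_zero1 add.right_inverse)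
lemma br_neg2: "br z (- x) = - br z x"
  by (metis add_eq_0_iff br_add2 br_zero2 add.right_inverse)
lemma br_diff1: "br (x - y) z = br x z - br y z"
  by (simp only: diff_conv_add_uminus br_add1 br_neg1)
lemma br_diff2: "br z (x - y) = br z x - br z y"
  by (simp only: diff_conv_add_uminus br_add2 br_neg2)
lemma br_alt: "br x x = 0"
  using la unfolding lie_algebra_def by blast
lemma br_anti: "br y x = - br x y"
proof -
  have "br (x + y) (x + y) = br x x + br y x + (br x y + br y y)" by (simp only: br_add1 br_add2)
  then have "br x y + br y x = 0" by (simp add: br_alt add.commute)
  then show ?thesis by (simp add: add_eq_0_iff)
qed
lemma jacobi: "br x (br y z) + br y (br z x) + br z (br x y) = 0"
  using la unfolding lie_algebra_def by blast

lemmas br_simps = br_add1 br_add2 br_scale1 br_scale2 br_zero1 br_zero2 br_neg1 br_neg2 br_diff1 br_diff2 br_alt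

end

lemma len1: "length xs = Suc 0 \<longleftrightarrow> (\<exists>a. xs = [a])"
  by (cases xs) auto
lemma len2: "length xs = 2 \<longleftrightarrow> (\<exists>a b. xs = [a, b])"
  by (auto simp: numeral_2_eq_2 length_Suc_conv)
lemma len3: "length xs = 3 \<longleftrightarrow> (\<exists>a b c. xs = [a, b, c])"
  by (auto simp: numeral_3_eq_3 length_Suc_conv)
lemma len4: "length xs = 4 \<longleftrightarrow> (\<exists>a b c d. xs = [a, b, c, d])"
  by (auto simp: eval_nat_numeral length_Suc_conv)

lemma less2: "(i::nat) < 2 \<longleftrightarrow> i = 0 \<or> i = 1" by auto
lemma less3: "(i::nat) < 3 \<longleftrightarrow> i = 0 \<or> i = 1 \<or> i = 2" by auto

context LA begin

lemma cochains0_iff: "\<omega> \<in> cochains sV sM A 0 \<longleftrightarrow> (\<forall>xs. xs \<noteq> [] \<longrightarrow> \<omega> xs = 0) \<and> \<omega> [] \<in> A"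
  by (auto simp: cochains_def)

lemma cochains1_iff: "\<omega> \<in> cochains sV sM A 1 \<longleftrightarrow>
   (\<forall>xs. length xs \<noteq> 1 \<longrightarrow> \<omega> xs = 0) \<and> (\<forall>x. \<omega> [x] \<in> A) \<and> Vector_Spaces.linear sV sM (\<lambda>y. \<omega> [y])"
  by (auto simp: cochains_def len1)

lemma cochains2_iff: "\<omega> \<in> cochains sV sM A 2 \<longleftrightarrow>
   (\<forall>xs. length xs \<noteq> 2 \<longrightarrow> \<omega> xs = 0) \<and> (\<forall>x y. \<omega> [x, y] \<in> A)
   \<and> (\<forall>b. Vector_Spaces.linear sV sM (\<lambda>y. \<omega> [y, b]))
   \<and> (\<forall>a. Vector_Spaces.linear sV sM (\<lambda>y. \<omega> [a, y]))
   \<and> (\<forall>x. \<omega> [x, x] = 0)"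
proof
  assume h: "\<omega> \<in> cochains sV sM A 2"
  show "(\<forall>xs. length xs \<noteq> 2 \<longrightarrow> \<omega> xs = 0) \<and> (\<forall>x y. \<omega> [x, y] \<in> A)
   \<and> (\<forall>b. Vector_Spaces.linear sV sM (\<lambda>y. \<omega> [y, b]))
   \<and> (\<forall>a. Vector_Spaces.linear sV sM (\<lambda>y. \<omega> [a, y]))
   \<and> (\<forall>x. \<omega> [x, x] = 0)"
  proof (intro conjI allI impI)
    fix b show "Vector_Spaces.linear sV sM (\<lambda>y. \<omega> [y, b])"
      using h unfolding cochains_def by (auto dest!: spec[of _ "[b, b]"] spec[of _ 0])
  next
    fix a show "Vector_Spaces.linear sV sM (\<lambda>y. \<omega> [a, y])"
      using h unfolding cochains_def by (auto dest!: spec[of _ "[a, a]"] spec[of _ 1])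
  next
    fix x
      have "\<forall>xs i j. length xs = 2 \<and> i < j \<and> j < 2 \<and> xs ! i = xs ! j \<longrightarrow> \<omega> xs = 0"
        using h by (simp add: cochains_def)
      from this[rule_format, of "[x, x]" 0 1] show "\<omega> [x, x] = 0" by simp
  qed (use h in \<open>auto simp: cochains_def\<close>)
next
  assume h: "(\<forall>xs. length xs \<noteq> 2 \<longrightarrow> \<omega> xs = 0) \<and> (\<forall>x y. \<omega> [x, y] \<in> A)
   \<and> (\<forall>b. Vector_Spaces.linear sV sM (\<lambda>y. \<omega> [y, b]))
   \<and> (\<forall>a. Vector_Spaces.linear sV sM (\<lambda>y. \<omega> [a, y]))
   \<and> (\<forall>x. \<omega> [x, x] = 0)"
  show "\<omega> \<in> cochains sV sM A 2"
    unfolding cochains_def using h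
    by (auto simp: len2 less2)
qed

lemma cochains3_iff: "\<omega> \<in> cochains sV sM A 3 \<longleftrightarrow>
   (\<forall>xs. length xs \<noteq> 3 \<longrightarrow> \<omega> xs = 0) \<and> (\<forall>x y z. \<omega> [x, y, z] \<in> A)
   \<and> (\<forall>b c. Vector_Spaces.linear sV sM (\<lambda>y. \<omega> [y, b, c]))
   \<and> (\<forall>a c. Vector_Spaces.linear sV sM (\<lambda>y. \<omega> [a, y, c]))
   \<and> (\<forall>a b. Vector_Spaces.linear sV sM (\<lambda>y. \<omega> [a, b, y]))
   \<and> (\<forall>x z. \<omega> [x, x, z] = 0) \<and> (\<forall>x y. \<omega> [x, y, x] = 0) \<and> (\<forall>x y. \<omega> [x, y, y] = 0)"
proof
  assume h: "\<omega> \<in> cochains sV sM A 3"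
  show "(\<forall>xs. length xs \<noteq> 3 \<longrightarrow> \<omega> xs = 0) \<and> (\<forall>x y z. \<omega> [x, y, z] \<in> A)
   \<and> (\<forall>b c. Vector_Spaces.linear sV sM (\<lambda>y. \<omega> [y, b, c]))
   \<and> (\<forall>a c. Vector_Spaces.linear sV sM (\<lambda>y. \<omega> [a, y, c]))
   \<and> (\<forall>a b. Vector_Spaces.linear sV sM (\<lambda>y. \<omega> [a, b, y]))
   \<and> (\<forall>x z. \<omega> [x, x, z] = 0) \<and> (\<forall>x y. \<omega> [x, y, x] = 0) \<and> (\<forall>x y. \<omega> [x, y, y] = 0)"
  proof (intro conjI allI impI)
    fix b c show "Vector_Spaces.linear sV sM (\<lambda>y. \<omega> [y, b, c])"
      using h unfolding cochains_def by (auto dest!: spec[of _ "[b, b, c]"] spec[of _ 0])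
  next
    fix a c show "Vector_Spaces.linear sV sM (\<lambda>y. \<omega> [a, y, c])"
      using h unfolding cochains_def by (auto dest!: spec[of _ "[a, a, c]"] spec[of _ 1])
  next
    fix a b show "Vector_Spaces.linear sV sM (\<lambda>y. \<omega> [a, b, y])"
      using h unfolding cochains_def by (auto dest!: spec[of _ "[a, b, b]"] spec[of _ 2])
  next
    fix x z
      have "\<forall>xs i j. length xs = 3 \<and> i < j \<and> j < 3 \<and> xs ! i = xs ! j \<longrightarrow> \<omega> xs = 0"
        using h by (simp add: cochains_def)
      from this[rule_format, of "[x, x, z]" 0 1] show "\<omega> [x, x, z] = 0" by simp
  next
    fix x y
      have "\<forall>xs i j. length xs = 3 \<and> i < j \<and> j < 3 \<and> xs ! i = xs ! j \<longrightarrow> \<omega> xs = 0"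
        using h by (simp add: cochains_def)
      from this[rule_format, of "[x, y, x]" 0 2] show "\<omega> [x, y, x] = 0" by simp
  next
    fix x y
      have "\<forall>xs i j. length xs = 3 \<and> i < j \<and> j < 3 \<and> xs ! i = xs ! j \<longrightarrow> \<omega> xs = 0"
        using h by (simp add: cochains_def)
      from this[rule_format, of "[x, y, y]" 1 2] show "\<omega> [x, y, y] = 0" by simp
  qed (use h in \<open>auto simp: cochains_def\<close>)
next
  assume h: "(\<forall>xs. length xs \<noteq> 3 \<longrightarrow> \<omega> xs = 0) \<and> (\<forall>x y z. \<omega> [x, y, z] \<in> A)
   \<and> (\<forall>b c. Vector_Spaces.linear sV sM (\<lambda>y. \<omega> [y, b, c]))
   \<and> (\<forall>a c. Vector_Spaces.linear sV sM (\<lambda>y. \<omega> [a, y, c]))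
   \<and> (\<forall>a b. Vector_Spaces.linear sV sM (\<lambda>y. \<omega> [a, b, y]))
   \<and> (\<forall>x z. \<omega> [x, x, z] = 0) \<and> (\<forall>x y. \<omega> [x, y, x] = 0) \<and> (\<forall>x y. \<omega> [x, y, y] = 0)"
  show "\<omega> \<in> cochains sV sM A 3"
    unfolding cochains_def using h
    by (auto simp: len3 less3 less2)
qed

end

definition modl :: "('k::field \<Rightarrow> 'm::ab_group_add \<Rightarrow> 'm) \<Rightarrow> ('v \<Rightarrow> 'm \<Rightarrow> 'm) \<Rightarrow> 'm set \<Rightarrow> bool" where
  "modl sM act A \<longleftrightarrow> Vector_Spaces.vector_space sM \<and> (\<forall>x u v. act x (u + v) = act x u + act x v)
     \<and> (\<forall>x a u. act x (sM a u) = sM a (act x u)) \<and> 0 \<in> A \<and> (\<forall>u\<in>A. \<forall>v\<in>A. u + v \<in> A)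
     \<and> (\<forall>a. \<forall>u\<in>A. sM a u \<in> A)"

lemma modl_vs: "modl sM act A \<Longrightarrow> Vector_Spaces.vector_space sM" by (simp add: modl_def)
lemma modl_mod: "modl sM act A \<Longrightarrow> module sM" by (simp add: modl_def module_iff_vector_space)

definition subsp :: "('k \<Rightarrow> 'm \<Rightarrow> 'm) \<Rightarrow> 'm::ab_group_add set \<Rightarrow> bool" where
  "subsp s B \<longleftrightarrow> 0 \<in> B \<and> (\<forall>x\<in>B. \<forall>y\<in>B. x + y \<in> B) \<and> (\<forall>x\<in>B. - x \<in> B) \<and> (\<forall>a. \<forall>x\<in>B. s a x \<in> B)"

context LA begin

lemma lin_plus: "Vector_Spaces.vector_space s2 \<Longrightarrow> Vector_Spaces.linear sV s2 f \<Longrightarrow> Vector_Spaces.linear sV s2 g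
  \<Longrightarrow> Vector_Spaces.linear sV s2 (\<lambda>y. f y + g y)"
proof -
  assume vs: "Vector_Spaces.vector_space s2" and f: "Vector_Spaces.linear sV s2 f" and g: "Vector_Spaces.linear sV s2 g"
  interpret M: module s2 using vs by (simp add: module_iff_vector_space)
  show ?thesis
    by (rule linI[OF vs]) (simp_all add: lin_add[OF f] lin_add[OF g] lin_scale[OF f] lin_scale[OF g] M.scale_right_distrib algebra_simps)
qed

lemma lin_smul: "Vector_Spaces.vector_space s2 \<Longrightarrow> Vector_Spaces.linear sV s2 f
  \<Longrightarrow> Vector_Spaces.linear sV s2 (\<lambda>y. s2 a (f y))"
proof -
  assume vs: "Vector_Spaces.vector_space s2" and f: "Vector_Spaces.linear sV s2 f"
  interpret M: module s2 using vs by (simp add: module_iff_vector_space)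
  show ?thesis
    by (rule linI[OF vs]) (simp_all add: lin_add[OF f] lin_scale[OF f] M.scale_right_distrib M.scale_left_commute mult.commute)
qed

lemma lin_zero: "Vector_Spaces.vector_space s2 \<Longrightarrow> Vector_Spaces.linear sV s2 (\<lambda>y. 0)"
proof -
  assume vs: "Vector_Spaces.vector_space s2"
  interpret M: module s2 using vs by (simp add: module_iff_vector_space)
  show ?thesis by (rule linI[OF vs]) simp_all
qed

lemma cochains_zero: "modl sM act A \<Longrightarrow> 0 \<in> cochains sV sM A p"
  by (simp add: cochains_def modl_def lin_zero)

lemma cochains_add: "modl sM act A \<Longrightarrow> \<omega>1 \<in> cochains sV sM A p \<Longrightarrow> \<omega>2 \<in> cochains sV sM A p
  \<Longrightarrow> \<omega>1 + \<omega>2 \<in> cochains sV sM A p"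
  unfolding cochains_def modl_def by (auto intro: lin_plus)

lemma cochains_scale: "modl sM act A \<Longrightarrow> \<omega> \<in> cochains sV sM A p
  \<Longrightarrow> cscale sM a \<omega> \<in> cochains sV sM A p"
proof -
  assume m: "modl sM act A" and w: "\<omega> \<in> cochains sV sM A p"
  interpret M: module sM using modl_mod[OF m] .
  show ?thesis
    using w m unfolding cochains_def modl_def cscale_def by (auto intro: lin_smul)
qed

lemma ce_diff_add: "modl sM act A \<Longrightarrow>
  ce_diff br sM act p (\<omega>1 + \<omega>2) = ce_diff br sM act p \<omega>1 + ce_diff br sM act p \<omega>2"
proof -
  assume m: "modl sM act A"
  interpret M: module sM using modl_mod[OF m] .
  have a: "\<And>x u v. act x (u + v) = act x u + act x v" using m by (simp add: modl_def)
  show ?thesis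
    unfolding fun_eq_iff ce_diff_def plus_fun_apply a M.scale_right_distrib sum.distrib
    by (simp add: ac_simps)
qed

lemma ce_diff_scale: "modl sM act A \<Longrightarrow>
  ce_diff br sM act p (cscale sM a \<omega>) = cscale sM a (ce_diff br sM act p \<omega>)"
proof -
  assume m: "modl sM act A"
  interpret M: module sM using modl_mod[OF m] .
  have a: "\<And>x a u. act x (sM a u) = sM a (act x u)" using m by (simp add: modl_def)
  show ?thesis
    unfolding fun_eq_iff ce_diff_def cscale_def a M.scale_right_distrib M.scale_sum_right
    by (auto simp: M.scale_right_distrib M.scale_sum_right mult.commute simp del: sum.lessThan_Suc)
qed

lemma ce_diff_zero: "modl sM act A \<Longrightarrow> ce_diff br sM act p 0 = 0"
  using ce_diff_add[of sM act A p 0 0] by simp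

lemma cscale_minus: "modl sM act A \<Longrightarrow> cscale sM (-1) \<omega> = - \<omega>"
proof -
  assume m: "modl sM act A"
  interpret M: module sM using modl_mod[OF m] .
  show ?thesis by (simp add: fun_eq_iff cscale_def)
qed

lemma cobound_subsp: "modl sM act A \<Longrightarrow> subsp (cscale sM) (coboundaries sV br sM act A p)"
proof -
  assume m: "modl sM act A"
  interpret M: module sM using modl_mod[OF m] .
  show ?thesis
  proof (cases "p = 0")
    case True then show ?thesis by (simp add: subsp_def coboundaries_def cscale_def fun_eq_iff zero_fun_def)
  next
    case False
    have B: "coboundaries sV br sM act A p = ce_diff br sM act (p - 1) ` cochains sV sM A (p - 1)"
      using False by (simp add: coboundaries_def)
    let ?d = "ce_diff br sM act (p - 1)" and ?C = "cochains sV sM A (p - 1)"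
    show ?thesis unfolding B subsp_def
    proof (intro conjI ballI allI)
      show "0 \<in> ?d ` ?C"
        using ce_diff_zero[OF m] cochains_zero[OF m] by (metis image_eqI)
    next
      fix x y assume "x \<in> ?d ` ?C" "y \<in> ?d ` ?C"
      then obtain u v where uv: "u \<in> ?C" "v \<in> ?C" "x = ?d u" "y = ?d v" by blast
      have "x + y = ?d (u + v)" using uv by (simp add: ce_diff_add[OF m])
      then show "x + y \<in> ?d ` ?C" using cochains_add[OF m uv(1,2)] by blast
    next
      fix a x assume "x \<in> ?d ` ?C"
      then obtain u where uv: "u \<in> ?C" "x = ?d u" by blast
      have "cscale sM a x = ?d (cscale sM a u)" using uv by (simp add: ce_diff_scale[OF m])
      then show "cscale sM a x \<in> ?d ` ?C" using cochains_scale[OF m uv(1)] by blast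
    next
      fix x assume "x \<in> ?d ` ?C"
      then obtain u where uv: "u \<in> ?C" "x = ?d u" by blast
      have "?d (cscale sM (-1) u) = cscale sM (-1) (?d u)" by (rule ce_diff_scale[OF m])
      then have "- x = ?d (cscale sM (-1) u)" using uv cscale_minus[OF m, of "?d u"] by simp
      then show "- x \<in> ?d ` ?C" using cochains_scale[OF m uv(1)] by blast
    qed
  qed
qed

end

lemma cd0: "module sM \<Longrightarrow> ce_diff br sM act 0 \<omega> [x] = act x (\<omega> [])"
  by (simp add: ce_diff_def del_nth_def module.scale_one)

lemma cd1: "module sM \<Longrightarrow> ce_diff br sM act 1 \<omega> [x, y] = act x (\<omega> [y]) - act y (\<omega> [x]) - \<omega> [br x y]"
  by (simp add: ce_diff_def del_nth_def module.scale_one module.scale_minus_left)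

lemma cd2: "module sM \<Longrightarrow> ce_diff br sM act 2 \<omega> [x, y, z] =
   act x (\<omega> [y, z]) - act y (\<omega> [x, z]) + act z (\<omega> [x, y])
   - \<omega> [br x y, z] + \<omega> [br x z, y] - \<omega> [br y z, x]"
  by (simp add: ce_diff_def del_nth_def module.scale_one module.scale_minus_left eval_nat_numeral)

lemma cd3: "module sM \<Longrightarrow> ce_diff br sM act 3 \<omega> [x, y, z, w] =
   act x (\<omega> [y, z, w]) - act y (\<omega> [x, z, w]) + act z (\<omega> [x, y, w]) - act w (\<omega> [x, y, z])
   - \<omega> [br x y, z, w] + \<omega> [br x z, y, w] - \<omega> [br y z, x, w]
   - \<omega> [br x w, y, z] + \<omega> [br y w, x, z] - \<omega> [br z w, x, y]"
  by (simp add: ce_diff_def del_nth_def module.scale_one module.scale_minus_left eval_nat_numeral)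

lemma cd_len: "length xs \<noteq> Suc p \<Longrightarrow> ce_diff br sM act p \<omega> xs = 0"
  by (simp add: ce_diff_def)

context LA begin

lemma dual_lin: "f \<in> dual_space sV \<Longrightarrow> Vector_Spaces.linear sV (*) f"
  by (simp add: dual_space_def)

lemma dual_add: "f \<in> dual_space sV \<Longrightarrow> f (x + y) = f x + f y"
  unfolding dual_space_def using lin_add[of sV "(*)" f x y] by blast
lemma dual_scale_ap: "f \<in> dual_space sV \<Longrightarrow> f (sV c x) = c * f x"
  unfolding dual_space_def using lin_scale[of sV "(*)" f c x] by blast
lemma dual_zero: assumes "f \<in> dual_space sV" shows "f 0 = 0"
proof -
  have "f (0 + 0) = f 0 + f 0" by (rule dual_add[OF assms])
  then have "f 0 + 0 = f 0 + f 0" by (simp only: add_0_right)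
  then show ?thesis by (simp only: add_left_cancel eq_commute)
qed
lemma dual_neg: assumes "f \<in> dual_space sV" shows "f (- x) = - f x"
proof -
  have "f (x + - x) = f x + f (- x)" by (rule dual_add[OF assms])
  then show ?thesis using dual_zero[OF assms] by (simp add: add_eq_0_iff)
qed
lemma dual_diff: assumes "f \<in> dual_space sV" shows "f (x - y) = f x - f y"
  by (simp only: diff_conv_add_uminus dual_add[OF assms] dual_neg[OF assms])

lemma dualI: "(\<And>x y. f (x + y) = f x + f y) \<Longrightarrow> (\<And>c x. f (sV c x) = c * f x) \<Longrightarrow> f \<in> dual_space sV"
  unfolding dual_space_def mem_Collect_eq by (rule linI[OF vs_K])

lemma modl_T: "modl ((*) :: 'k \<Rightarrow> 'k \<Rightarrow> 'k) (triv_act :: 'v \<Rightarrow> 'k \<Rightarrow> 'k) UNIV"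
  by (simp add: modl_def vs_K triv_act_def)

lemma modl_D: "modl (dual_scale :: 'k \<Rightarrow> ('v \<Rightarrow> 'k) \<Rightarrow> _) (dual_act br) (dual_space sV)"
  unfolding modl_def
proof (intro conjI allI ballI)
  show "Vector_Spaces.vector_space (dual_scale :: 'k \<Rightarrow> ('v \<Rightarrow> 'k) \<Rightarrow> _)" by (rule vs_D)
  show "(0::'v\<Rightarrow>'k) \<in> dual_space sV" by (rule dualI) simp_all
next
  fix u v :: "'v \<Rightarrow> 'k" assume "u \<in> dual_space sV" "v \<in> dual_space sV"
  then show "u + v \<in> dual_space sV" by (intro dualI) (simp_all add: dual_add[of u] dual_add[of v] dual_scale_ap[of u] dual_scale_ap[of v] algebra_simps)
next
  fix a and u :: "'v \<Rightarrow> 'k" assume "u \<in> dual_space sV"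
  then show "dual_scale a u \<in> dual_space sV" by (intro dualI) (simp_all add: dual_scale_def dual_add[of u] dual_scale_ap[of u] algebra_simps)
qed (simp_all add: dual_act_def dual_scale_def fun_eq_iff)

definition bil :: "('v \<Rightarrow> 'v \<Rightarrow> 'k) \<Rightarrow> bool" where
  "bil \<kappa> \<longleftrightarrow> (\<forall>y. \<kappa> y \<in> dual_space sV) \<and> (\<forall>z. (\<lambda>y. \<kappa> y z) \<in> dual_space sV)"

lemma sym2_iff: "\<kappa> \<in> sym2 sV \<longleftrightarrow> bil \<kappa> \<and> (\<forall>y z. \<kappa> y z = \<kappa> z y)"
  by (simp add: sym2_def bil_def dual_space_def)

lemma bil_d1: "bil \<kappa> \<Longrightarrow> (\<lambda>y. \<kappa> y z) \<in> dual_space sV" by (simp add: bil_def)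
lemma bil_d2: "bil \<kappa> \<Longrightarrow> \<kappa> z \<in> dual_space sV" by (simp add: bil_def)
lemma bil_add1: "bil \<kappa> \<Longrightarrow> \<kappa> (x + y) z = \<kappa> x z + \<kappa> y z"
  using dual_add[OF bil_d1] by blast
lemma bil_add2: "bil \<kappa> \<Longrightarrow> \<kappa> z (x + y) = \<kappa> z x + \<kappa> z y"
  using dual_add[OF bil_d2] by blast
lemma bil_scale1: "bil \<kappa> \<Longrightarrow> \<kappa> (sV c x) z = c * \<kappa> x z"
  using dual_scale_ap[OF bil_d1] by blast
lemma bil_scale2: "bil \<kappa> \<Longrightarrow> \<kappa> z (sV c x) = c * \<kappa> z x"
  using dual_scale_ap[OF bil_d2] by blast
lemma bil_neg1: "bil \<kappa> \<Longrightarrow> \<kappa> (- x) z = - \<kappa> x z"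
  using dual_neg[OF bil_d1] by blast
lemma bil_neg2: "bil \<kappa> \<Longrightarrow> \<kappa> z (- x) = - \<kappa> z x"
  using dual_neg[OF bil_d2] by blast
lemma bil_zero1: "bil \<kappa> \<Longrightarrow> \<kappa> 0 z = 0"
  using dual_zero[OF bil_d1] by blast
lemma bil_zero2: "bil \<kappa> \<Longrightarrow> \<kappa> z 0 = 0"
  using dual_zero[OF bil_d2] by blast
lemma bil_diff1: "bil \<kappa> \<Longrightarrow> \<kappa> (x - y) z = \<kappa> x z - \<kappa> y z"
  using dual_diff[OF bil_d1] by blast
lemma bil_diff2: "bil \<kappa> \<Longrightarrow> \<kappa> z (x - y) = \<kappa> z x - \<kappa> z y"
  using dual_diff[OF bil_d2] by blast

lemmas bil_simps = bil_add1 bil_add2 bil_scale1 bil_scale2 bil_neg1 bil_neg2 bil_zero1 bil_zero2 bil_diff1 bil_diff2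

lemma bilI: "(\<And>x y z. \<kappa> (x + y) z = \<kappa> x z + \<kappa> y z) \<Longrightarrow> (\<And>x y z. \<kappa> z (x + y) = \<kappa> z x + \<kappa> z y)
  \<Longrightarrow> (\<And>c x z. \<kappa> (sV c x) z = c * \<kappa> x z) \<Longrightarrow> (\<And>c x z. \<kappa> z (sV c x) = c * \<kappa> z x) \<Longrightarrow> bil \<kappa>"
  unfolding bil_def by (auto intro!: dualI)

lemma modl_S: "modl (sym_scale :: 'k \<Rightarrow> ('v \<Rightarrow> 'v \<Rightarrow> 'k) \<Rightarrow> _) (sym_act br) (sym2 sV)"
  unfolding modl_def
proof (intro conjI allI ballI)
  show "Vector_Spaces.vector_space (sym_scale :: 'k \<Rightarrow> ('v \<Rightarrow> 'v \<Rightarrow> 'k) \<Rightarrow> _)" by (rule vs_S)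
  show "(0::'v\<Rightarrow>'v\<Rightarrow>'k) \<in> sym2 sV" unfolding sym2_iff by (auto intro!: bilI)
next
  fix u v :: "'v \<Rightarrow> 'v \<Rightarrow> 'k" assume "u \<in> sym2 sV" "v \<in> sym2 sV"
  then show "u + v \<in> sym2 sV" unfolding sym2_iff by (auto intro!: bilI simp: bil_simps[of u] bil_simps[of v] algebra_simps)
next
  fix a and u :: "'v \<Rightarrow> 'v \<Rightarrow> 'k" assume "u \<in> sym2 sV"
  then show "sym_scale a u \<in> sym2 sV" unfolding sym2_iff sym_scale_def by (auto intro!: bilI simp: bil_simps[of u] algebra_simps)
qed (simp_all add: sym_act_def sym_scale_def fun_eq_iff algebra_simps)

end

definition additive_map :: "('a::ab_group_add \<Rightarrow> 'b::ab_group_add) \<Rightarrow> bool" where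
  "additive_map F \<longleftrightarrow> (\<forall>x y. F (x + y) = F x + F y)"

lemma additive_zero: "additive_map F \<Longrightarrow> F 0 = 0"
  unfolding additive_map_def by (metis add_cancel_right_right add_0)

lemma subsp_diff: "subsp s B \<Longrightarrow> x \<in> B \<Longrightarrow> y \<in> B \<Longrightarrow> x - y \<in> B"
  unfolding subsp_def by (metis diff_conv_add_uminus)

lemma qmap_coset:
  assumes F: "additive_map F" and FB: "F ` B \<subseteq> B'" and B: "0 \<in> B" and B': "subsp s' B'"
  shows "qmap F B' (coset B z) = coset B' (F z)"
proof
  show "qmap F B' (coset B z) \<subseteq> coset B' (F z)"
  proof
    fix u assume "u \<in> qmap F B' (coset B z)"
    then obtain b b' where bb: "b \<in> B" "b' \<in> B'" "u = F (z + b) + b'"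
      unfolding qmap_def coset_def by blast
    then have "u = F z + (F b + b')" using F unfolding additive_map_def by (simp add: add.assoc)
    moreover have "F b + b' \<in> B'" using bb FB B' unfolding subsp_def by blast
    ultimately show "u \<in> coset B' (F z)" unfolding coset_def by blast
  qed
next
  show "coset B' (F z) \<subseteq> qmap F B' (coset B z)"
  proof
    fix u assume "u \<in> coset B' (F z)"
    moreover have "z \<in> coset B z" using B unfolding coset_def by (metis add_0_right image_eqI)
    ultimately show "u \<in> qmap F B' (coset B z)" unfolding qmap_def by blast
  qed
qed

lemma qadd_coset:
  assumes B: "subsp s B"
  shows "qadd (coset B x) (coset B y) = coset B (x + y)"
proof
  show "qadd (coset B x) (coset B y) \<subseteq> coset B (x + y)"
  proof
    fix u assume "u \<in> qadd (coset B x) (coset B y)"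
    then obtain b1 b2 where bb: "b1 \<in> B" "b2 \<in> B" "u = (x + b1) + (y + b2)"
      unfolding qadd_def coset_def by blast
    then have "u = (x + y) + (b1 + b2)" by (simp add: algebra_simps)
    moreover have "b1 + b2 \<in> B" using bb B unfolding subsp_def by blast
    ultimately show "u \<in> coset B (x + y)" unfolding coset_def by blast
  qed
next
  show "coset B (x + y) \<subseteq> qadd (coset B x) (coset B y)"
  proof
    fix u assume "u \<in> coset B (x + y)"
    then obtain b where b: "b \<in> B" "u = x + y + b" unfolding coset_def by blast
    have "x + b \<in> coset B x" "y + 0 \<in> coset B y" using b B unfolding coset_def subsp_def by blast+
    moreover have "u = (x + b) + (y + 0)" using b by (simp add: algebra_simps)
    ultimately show "u \<in> qadd (coset B x) (coset B y)" unfolding qadd_def by blast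
  qed
qed

lemma qscale_coset:
  assumes B: "subsp s B" and sa: "\<And>x y. s a (x + y) = s a x + s a y"
  shows "qscale s B a (coset B z) = coset B (s a z)"
proof
  show "qscale s B a (coset B z) \<subseteq> coset B (s a z)"
  proof
    fix u assume "u \<in> qscale s B a (coset B z)"
    then obtain b0 b where bb: "b0 \<in> B" "b \<in> B" "u = s a (z + b0) + b"
      unfolding qscale_def coset_def by blast
    then have "u = s a z + (s a b0 + b)" by (simp add: sa add.assoc)
    moreover have "s a b0 + b \<in> B" using bb B unfolding subsp_def by blast
    ultimately show "u \<in> coset B (s a z)" unfolding coset_def by blast
  qed
next
  show "coset B (s a z) \<subseteq> qscale s B a (coset B z)"
  proof
    fix u assume "u \<in> coset B (s a z)"
    then obtain b where b: "b \<in> B" "u = s a z + b" unfolding coset_def by blast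
    have "z + 0 \<in> coset B z" using B unfolding coset_def subsp_def by blast
    then show "u \<in> qscale s B a (coset B z)" unfolding qscale_def using b by force
  qed
qed

lemma WDL:
  assumes B: "subsp s B" and B': "subsp s' B'"
    and sadd: "\<And>a x y. s a (x + y) = s a x + s a y"
    and s'add: "\<And>a x y. s' a (x + y) = s' a x + s' a y"
    and F: "additive_map F" and Fs: "\<And>a x. F (s a x) = s' a (F x)"
    and FB: "F ` B \<subseteq> B'" and FZ: "F ` Z \<subseteq> Z'"
  shows "well_defined_linear s B (coset B ` Z) s' B' (coset B' ` Z') F"
proof -
  have B0: "0 \<in> B" using B by (simp add: subsp_def)
  note qm = qmap_coset[OF F FB B0 B']
  show ?thesis unfolding well_defined_linear_def
  proof (intro conjI ballI allI)
    fix c assume "c \<in> coset B ` Z"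
    then obtain z where z: "z \<in> Z" "c = coset B z" by blast
    show "qmap F B' c \<in> coset B' ` Z'" using z FZ qm by blast
  next
    fix c d assume "c \<in> coset B ` Z" "d \<in> coset B ` Z"
    then obtain z w where z: "c = coset B z" "d = coset B w" by blast
    show "qmap F B' (qadd c d) = qadd (qmap F B' c) (qmap F B' d)"
      using F unfolding z qadd_coset[OF B] qm qadd_coset[OF B'] additive_map_def by simp
  next
    fix a c assume "c \<in> coset B ` Z"
    then obtain z where z: "c = coset B z" by blast
    show "qmap F B' (qscale s B a c) = qscale s' B' a (qmap F B' c)"
      unfolding z qscale_coset[OF B sadd] qm qscale_coset[OF B' s'add] Fs ..
  qed
qed

lemma coset_eq:
  assumes B: "subsp s B" and d: "u - v \<in> B"
  shows "coset B u = coset B v"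
proof
  show "coset B u \<subseteq> coset B v"
  proof
    fix x assume "x \<in> coset B u"
    then obtain b where b: "b \<in> B" "x = u + b" unfolding coset_def by blast
    then have "x = v + ((u - v) + b)" by (simp add: algebra_simps)
    moreover have "(u - v) + b \<in> B" using B d b unfolding subsp_def by blast
    ultimately show "x \<in> coset B v" unfolding coset_def by blast
  qed
next
  show "coset B v \<subseteq> coset B u"
  proof
    fix x assume "x \<in> coset B v"
    then obtain b where b: "b \<in> B" "x = v + b" unfolding coset_def by blast
    then have "x = u + (- (u - v) + b)" by (simp add: algebra_simps)
    moreover have "- (u - v) + b \<in> B" using B d b unfolding subsp_def by blast
    ultimately show "x \<in> coset B u" unfolding coset_def by blast
  qed
qed

lemma coset_zero_mem:
  assumes B: "subsp s B" and e: "coset B u = coset B 0"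
  shows "u \<in> B"
proof -
  have "u + 0 \<in> coset B u" using B unfolding coset_def subsp_def by blast
  then have "u \<in> coset B 0" using e by simp
  then show ?thesis unfolding coset_def by auto
qed

lemma EXACT:
  assumes B1: "subsp s1 B1" and B2: "subsp s2 B2" and B3: "subsp s3 B3"
    and F: "additive_map F" and FB: "F ` B1 \<subseteq> B2"
    and G: "additive_map G" and GB: "G ` B2 \<subseteq> B3"
    and comp: "\<And>z. z \<in> Z1 \<Longrightarrow> F z \<in> Z2 \<and> G (F z) \<in> B3"
    and ker: "\<And>w. w \<in> Z2 \<Longrightarrow> G w \<in> B3 \<Longrightarrow> \<exists>z\<in>Z1. w - F z \<in> B2"
  shows "exact_at (coset B1 ` Z1) F B2 (coset B2 ` Z2) G B3"
proof -
  have B10: "0 \<in> B1" and B20: "0 \<in> B2" using B1 B2 by (simp_all add: subsp_def)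
  note qF = qmap_coset[OF F FB B10 B2] and qG = qmap_coset[OF G GB B20 B3]
  show ?thesis unfolding exact_at_def
  proof
    show "qmap F B2 ` coset B1 ` Z1 \<subseteq> {c \<in> coset B2 ` Z2. qmap G B3 c = coset B3 0}"
    proof
      fix c assume "c \<in> qmap F B2 ` coset B1 ` Z1"
      then obtain z where z: "z \<in> Z1" "c = coset B2 (F z)" using qF by blast
      have "coset B3 (G (F z)) = coset B3 0" using comp[OF z(1)] by (intro coset_eq[OF B3]) simp
      then show "c \<in> {c \<in> coset B2 ` Z2. qmap G B3 c = coset B3 0}"
        using z comp[OF z(1)] qG by auto
    qed
  next
    show "{c \<in> coset B2 ` Z2. qmap G B3 c = coset B3 0} \<subseteq> qmap F B2 ` coset B1 ` Z1"
    proof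
      fix c assume "c \<in> {c \<in> coset B2 ` Z2. qmap G B3 c = coset B3 0}"
      then obtain w where w: "w \<in> Z2" "c = coset B2 w" "coset B3 (G w) = coset B3 0"
        using qG by auto
      have "G w \<in> B3" using coset_zero_mem[OF B3 w(3)] .
      then obtain z where z: "z \<in> Z1" "w - F z \<in> B2" using ker w(1) by blast
      have "c = coset B2 (F z)" using coset_eq[OF B2 z(2)] w(2) by simp
      then show "c \<in> qmap F B2 ` coset B1 ` Z1" using z(1) qF by blast
    qed
  qed
qed

lemma INJ:
  assumes B: "subsp s B" and B': "subsp s' B'"
    and F: "additive_map F" and FB: "F ` B \<subseteq> B'" and Z0: "0 \<in> Z"
    and ker: "\<And>z. z \<in> Z \<Longrightarrow> F z \<in> B' \<Longrightarrow> z \<in> B"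
  shows "{c \<in> coset B ` Z. qmap F B' c = coset B' 0} = {coset B 0}"
proof -
  have B0: "0 \<in> B" using B by (simp add: subsp_def)
  note qF = qmap_coset[OF F FB B0 B']
  show ?thesis
  proof
    show "{c \<in> coset B ` Z. qmap F B' c = coset B' 0} \<subseteq> {coset B 0}"
    proof
      fix c assume "c \<in> {c \<in> coset B ` Z. qmap F B' c = coset B' 0}"
      then obtain z where z: "z \<in> Z" "c = coset B z" "coset B' (F z) = coset B' 0" using qF by auto
      have "z \<in> B" using ker[OF z(1) coset_zero_mem[OF B' z(3)]] .
      then have "coset B z = coset B 0" by (intro coset_eq[OF B]) simp
      then show "c \<in> {coset B 0}" using z by simp
    qed
  next
    show "{coset B 0} \<subseteq> {c \<in> coset B ` Z. qmap F B' c = coset B' 0}"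
      using Z0 qF additive_zero[OF F] by auto
  qed
qed

definition mk0 :: "'m \<Rightarrow> 'v list \<Rightarrow> 'm::ab_group_add" where "mk0 v = (\<lambda>xs. if xs = [] then v else 0)"
definition mk1 :: "('v \<Rightarrow> 'm) \<Rightarrow> 'v list \<Rightarrow> 'm::ab_group_add" where "mk1 f = (\<lambda>xs. if length xs = 1 then f (xs ! 0) else 0)"
definition mk2 :: "('v \<Rightarrow> 'v \<Rightarrow> 'm) \<Rightarrow> 'v list \<Rightarrow> 'm::ab_group_add" where "mk2 f = (\<lambda>xs. if length xs = 2 then f (xs ! 0) (xs ! 1) else 0)"
definition mk3 :: "('v \<Rightarrow> 'v \<Rightarrow> 'v \<Rightarrow> 'm) \<Rightarrow> 'v list \<Rightarrow> 'm::ab_group_add" where "mk3 f = (\<lambda>xs. if length xs = 3 then f (xs ! 0) (xs ! 1) (xs ! 2) else 0)"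

lemma mk0_ap[simp]: "mk0 v [] = v" "mk0 v (x # xs) = 0" by (simp_all add: mk0_def)
lemma mk1_ap[simp]: "mk1 f [a] = f a" "mk1 f [] = 0" "mk1 f (a # b # xs) = 0" by (simp_all add: mk1_def)
lemma mk2_ap[simp]: "mk2 f [a, b] = f a b" "mk2 f [] = 0" "mk2 f [a] = 0" "mk2 f (a # b # c # xs) = 0" by (simp_all add: mk2_def)
lemma mk3_ap[simp]: "mk3 f [a, b, c] = f a b c" "mk3 f [] = 0" "mk3 f [a] = 0" "mk3 f [a, b] = 0" "mk3 f (a # b # c # d # xs) = 0" by (simp_all add: mk3_def)

lemma mk1_off: "length xs \<noteq> 1 \<Longrightarrow> mk1 f xs = 0" by (simp add: mk1_def)
lemma mk2_off: "length xs \<noteq> 2 \<Longrightarrow> mk2 f xs = 0" by (simp add: mk2_def)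
lemma mk3_off: "length xs \<noteq> 3 \<Longrightarrow> mk3 f xs = 0" by (simp add: mk3_def)

lemma rep0: "(\<forall>xs. xs \<noteq> [] \<longrightarrow> \<omega> xs = 0) \<Longrightarrow> \<omega> = mk0 (\<omega> [])"
  by (auto simp: fun_eq_iff mk0_def)
lemma rep1: "(\<forall>xs. length xs \<noteq> 1 \<longrightarrow> \<omega> xs = 0) \<Longrightarrow> \<omega> = mk1 (\<lambda>a. \<omega> [a])"
  by (auto simp: fun_eq_iff mk1_def len1)
lemma rep2: "(\<forall>xs. length xs \<noteq> 2 \<longrightarrow> \<omega> xs = 0) \<Longrightarrow> \<omega> = mk2 (\<lambda>a b. \<omega> [a, b])"
  by (auto simp: fun_eq_iff mk2_def len2)
lemma rep3: "(\<forall>xs. length xs \<noteq> 3 \<longrightarrow> \<omega> xs = 0) \<Longrightarrow> \<omega> = mk3 (\<lambda>a b c. \<omega> [a, b, c])"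
  by (auto simp: fun_eq_iff mk3_def len3)

lemma mk0_eq: "mk0 f = mk0 g \<longleftrightarrow> f = g" by (metis mk0_ap(1))
lemma mk1_eq: "mk1 f = mk1 g \<longleftrightarrow> f = g" by (metis mk1_ap(1) ext)
lemma mk2_eq: "mk2 f = mk2 g \<longleftrightarrow> f = g"
proof
  assume "mk2 f = mk2 g"
  then have "\<And>a b. mk2 f [a, b] = mk2 g [a, b]" by simp
  then show "f = g" by (simp add: fun_eq_iff)
qed simp
lemma mk3_eq: "mk3 f = mk3 g \<longleftrightarrow> f = g"
proof
  assume "mk3 f = mk3 g"
  then have "\<And>a b c. mk3 f [a, b, c] = mk3 g [a, b, c]" by simp
  then show "f = g" by (simp add: fun_eq_iff)
qed simp

lemma mk0_zero: "mk0 0 = 0" by (simp add: fun_eq_iff mk0_def)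
lemma mk1_zero: "mk1 (\<lambda>a. 0) = 0" by (simp add: fun_eq_iff mk1_def)
lemma mk2_zero: "mk2 (\<lambda>a b. 0) = 0" by (simp add: fun_eq_iff mk2_def)
lemma mk3_zero: "mk3 (\<lambda>a b c. 0) = 0" by (simp add: fun_eq_iff mk3_def)

lemma mk0_plus: "mk0 f + mk0 g = mk0 (f + g)" by (simp add: fun_eq_iff mk0_def)
lemma mk1_plus: "mk1 f + mk1 g = mk1 (\<lambda>a. f a + g a)" by (simp add: fun_eq_iff mk1_def)
lemma mk2_plus: "mk2 f + mk2 g = mk2 (\<lambda>a b. f a b + g a b)" by (simp add: fun_eq_iff mk2_def)
lemma mk3_plus: "mk3 f + mk3 g = mk3 (\<lambda>a b c. f a b c + g a b c)" by (simp add: fun_eq_iff mk3_def)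
lemma mk0_minus: "mk0 f - mk0 g = mk0 (f - g)" by (simp add: fun_eq_iff mk0_def)
lemma mk1_minus: "mk1 f - mk1 g = mk1 (\<lambda>a. f a - g a)" by (simp add: fun_eq_iff mk1_def)
lemma mk2_minus: "mk2 f - mk2 g = mk2 (\<lambda>a b. f a b - g a b)" by (simp add: fun_eq_iff mk2_def)
lemma mk3_minus: "mk3 f - mk3 g = mk3 (\<lambda>a b c. f a b c - g a b c)" by (simp add: fun_eq_iff mk3_def)

lemma mk_cscale:
  assumes "\<And>c. s c 0 = 0"
  shows "cscale s c (mk0 v) = mk0 (s c v)"
    "cscale s c (mk1 f) = mk1 (\<lambda>a. s c (f a))"
    "cscale s c (mk2 g) = mk2 (\<lambda>a b. s c (g a b))"
    "cscale s c (mk3 h) = mk3 (\<lambda>a b d. s c (h a b d))"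
  using assms by (simp_all add: fun_eq_iff cscale_def mk0_def mk1_def mk2_def mk3_def)

lemma alpha_mk:
  "alpha_til 1 (mk1 f) = mk0 f"
  "alpha_til 2 (mk2 g) = mk1 (\<lambda>a. g a)"
  "alpha_til 3 (mk3 h) = mk2 (\<lambda>a b. h a b)"
  by (auto simp: fun_eq_iff alpha_til_def mk0_def mk1_def mk2_def mk3_def len1 len2 zero_fun_def)

lemma S_mk: "S_map (mk1 E) = (\<lambda>y z. E y z + E z y)"
  by (simp add: S_map_def)

lemma beta_mk: "beta2_til (mk2 W) = mk1 (\<lambda>x y z. W x y z + W x z y)"
  by (auto simp: fun_eq_iff beta2_til_def mk1_def len1 zero_fun_def)

lemma Gamma_mk: "Gamma br \<kappa> = mk3 (\<lambda>x y z. \<kappa> (br x y) z)"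
  by (simp add: fun_eq_iff Gamma_def mk3_def)

context LA begin

definition tril :: "('v \<Rightarrow> 'v \<Rightarrow> 'v \<Rightarrow> 'k) \<Rightarrow> bool" where
  "tril t \<longleftrightarrow> (\<forall>b c. (\<lambda>a. t a b c) \<in> dual_space sV) \<and> (\<forall>a c. (\<lambda>b. t a b c) \<in> dual_space sV) \<and> (\<forall>a b. t a b \<in> dual_space sV)"

lemma tril_d1: "tril t \<Longrightarrow> (\<lambda>a. t a b c) \<in> dual_space sV" by (simp add: tril_def)
lemma tril_d2: "tril t \<Longrightarrow> (\<lambda>b. t a b c) \<in> dual_space sV" by (simp add: tril_def)
lemma tril_d3: "tril t \<Longrightarrow> (\<lambda>c. t a b c) \<in> dual_space sV" by (simp add: tril_def)

lemma tril_add1: "tril t \<Longrightarrow> t (x + y) b c = t x b c + t y b c"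
  using dual_add[OF tril_d1] by blast
lemma tril_scale1: "tril t \<Longrightarrow> t (sV r x) b c = r * t x b c"
  using dual_scale_ap[OF tril_d1] by blast
lemma tril_neg1: "tril t \<Longrightarrow> t (- x) b c = - t x b c"
  using dual_neg[OF tril_d1] by blast
lemma tril_zero1: "tril t \<Longrightarrow> t 0 b c = 0"
  using dual_zero[OF tril_d1] by blast
lemma tril_diff1: "tril t \<Longrightarrow> t (x - y) b c = t x b c - t y b c"
  using dual_diff[OF tril_d1] by blast
lemma tril_add2: "tril t \<Longrightarrow> t a (x + y) c = t a x c + t a y c"
  using dual_add[OF tril_d2] by blast
lemma tril_scale2: "tril t \<Longrightarrow> t a (sV r x) c = r * t a x c"
  using dual_scale_ap[OF tril_d2] by blast
lemma tril_neg2: "tril t \<Longrightarrow> t a (- x) c = - t a x c"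
  using dual_neg[OF tril_d2] by blast
lemma tril_zero2: "tril t \<Longrightarrow> t a 0 c = 0"
  using dual_zero[OF tril_d2] by blast
lemma tril_diff2: "tril t \<Longrightarrow> t a (x - y) c = t a x c - t a y c"
  using dual_diff[OF tril_d2] by blast
lemma tril_add3: "tril t \<Longrightarrow> t a b (x + y) = t a b x + t a b y"
  using dual_add[OF tril_d3] by blast
lemma tril_scale3: "tril t \<Longrightarrow> t a b (sV r x) = r * t a b x"
  using dual_scale_ap[OF tril_d3] by blast
lemma tril_neg3: "tril t \<Longrightarrow> t a b (- x) = - t a b x"
  using dual_neg[OF tril_d3] by blast
lemma tril_zero3: "tril t \<Longrightarrow> t a b 0 = 0"
  using dual_zero[OF tril_d3] by blast
lemma tril_diff3: "tril t \<Longrightarrow> t a b (x - y) = t a b x - t a b y"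
  using dual_diff[OF tril_d3] by blast

lemmas tril_simps = tril_add1 tril_scale1 tril_neg1 tril_zero1 tril_diff1 tril_add2 tril_scale2 tril_neg2 tril_zero2 tril_diff2 tril_add3 tril_scale3 tril_neg3 tril_zero3 tril_diff3

lemmas cochains1_iff' = cochains1_iff[unfolded One_nat_def]

lemma lin_D_iff: "Vector_Spaces.linear sV dual_scale F \<longleftrightarrow> (\<forall>z. (\<lambda>y. F y z) \<in> dual_space sV)"
  unfolding linear_iff dual_space_def using vsV vs_D vs_K
  by (auto simp: fun_eq_iff dual_scale_def)

lemma lin_S_iff: "Vector_Spaces.linear sV sym_scale F \<longleftrightarrow> (\<forall>y z. (\<lambda>x. F x y z) \<in> dual_space sV)"
  unfolding linear_iff dual_space_def using vsV vs_S vs_K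
  by (auto simp: fun_eq_iff sym_scale_def)

lemma lin_K_iff: "Vector_Spaces.linear sV (*) f \<longleftrightarrow> f \<in> dual_space sV"
  by (simp add: dual_space_def)

abbreviation "Ct p \<equiv> cochains sV ((*) :: 'k \<Rightarrow> 'k \<Rightarrow> 'k) UNIV p"
abbreviation "Cd p \<equiv> cochains sV (dual_scale :: 'k \<Rightarrow> ('v \<Rightarrow> 'k) \<Rightarrow> _) (dual_space sV) p"
abbreviation "Cs p \<equiv> cochains sV (sym_scale :: 'k \<Rightarrow> ('v \<Rightarrow> 'v \<Rightarrow> 'k) \<Rightarrow> _) (sym2 sV) p"

lemma Ct1_iff: "\<omega> \<in> Ct 1 \<longleftrightarrow> (\<exists>l. \<omega> = mk1 l \<and> l \<in> dual_space sV)"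
proof
  assume h: "\<omega> \<in> Ct 1"
  then have "\<omega> = mk1 (\<lambda>a. \<omega> [a])" by (intro rep1) (use h in \<open>unfold cochains1_iff, blast\<close>)
  moreover have "(\<lambda>a. \<omega> [a]) \<in> dual_space sV" using h unfolding cochains1_iff by (simp add: lin_K_iff)
  ultimately show "\<exists>l. \<omega> = mk1 l \<and> l \<in> dual_space sV" by blast
next
  assume "\<exists>l. \<omega> = mk1 l \<and> l \<in> dual_space sV"
  then show "\<omega> \<in> Ct 1" by (auto simp: cochains1_iff cochains1_iff' lin_K_iff mk1_off)
qed

lemma Ct2_iff: "\<omega> \<in> Ct 2 \<longleftrightarrow> (\<exists>f. \<omega> = mk2 f \<and> bil f \<and> (\<forall>a. f a a = 0))"
proof
  assume h: "\<omega> \<in> Ct 2"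
  then have "\<omega> = mk2 (\<lambda>a b. \<omega> [a, b])" by (intro rep2) (simp add: cochains2_iff)
  moreover have "bil (\<lambda>a b. \<omega> [a, b])" using h by (simp add: cochains2_iff lin_K_iff bil_def)
  moreover have "\<forall>a. \<omega> [a, a] = 0" using h by (simp add: cochains2_iff)
  ultimately show "\<exists>f. \<omega> = mk2 f \<and> bil f \<and> (\<forall>a. f a a = 0)" by blast
next
  assume "\<exists>f. \<omega> = mk2 f \<and> bil f \<and> (\<forall>a. f a a = 0)"
  then show "\<omega> \<in> Ct 2" by (auto simp: cochains2_iff lin_K_iff mk2_off bil_def)
qed

definition alt3 :: "('v \<Rightarrow> 'v \<Rightarrow> 'v \<Rightarrow> 'm::zero) \<Rightarrow> bool" where
  "alt3 t \<longleftrightarrow> (\<forall>x z. t x x z = 0) \<and> (\<forall>x y. t x y x = 0) \<and> (\<forall>x y. t x y y = 0)"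

lemma Ct3_iff: "\<omega> \<in> Ct 3 \<longleftrightarrow> (\<exists>f. \<omega> = mk3 f \<and> tril f \<and> alt3 f)"
proof
  assume h: "\<omega> \<in> Ct 3"
  then have "\<omega> = mk3 (\<lambda>a b c. \<omega> [a, b, c])" by (intro rep3) (simp add: cochains3_iff)
  moreover have "tril (\<lambda>a b c. \<omega> [a, b, c])" using h by (simp add: cochains3_iff lin_K_iff tril_def)
  moreover have "alt3 (\<lambda>a b c. \<omega> [a, b, c])" using h by (simp add: cochains3_iff alt3_def)
  ultimately show "\<exists>f. \<omega> = mk3 f \<and> tril f \<and> alt3 f" by blast
next
  assume "\<exists>f. \<omega> = mk3 f \<and> tril f \<and> alt3 f"
  then show "\<omega> \<in> Ct 3" by (auto simp: cochains3_iff lin_K_iff mk3_off tril_def alt3_def)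
qed

lemma Cd0_iff: "\<omega> \<in> Cd 0 \<longleftrightarrow> (\<exists>l. \<omega> = mk0 l \<and> l \<in> dual_space sV)"
proof
  assume h: "\<omega> \<in> Cd 0"
  then have "\<omega> = mk0 (\<omega> [])" by (intro rep0) (simp add: cochains0_iff)
  then show "\<exists>l. \<omega> = mk0 l \<and> l \<in> dual_space sV" using h by (auto simp: cochains0_iff)
next
  assume "\<exists>l. \<omega> = mk0 l \<and> l \<in> dual_space sV"
  then show "\<omega> \<in> Cd 0" by (auto simp: cochains0_iff mk0_def)
qed

lemma Cd1_iff: "\<omega> \<in> Cd 1 \<longleftrightarrow> (\<exists>E. \<omega> = mk1 E \<and> bil E)"
proof
  assume h: "\<omega> \<in> Cd 1"
  then have "\<omega> = mk1 (\<lambda>a. \<omega> [a])" by (intro rep1) (use h in \<open>unfold cochains1_iff, blast\<close>)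
  moreover have "bil (\<lambda>a. \<omega> [a])" using h unfolding cochains1_iff by (simp add: lin_D_iff bil_def)
  ultimately show "\<exists>E. \<omega> = mk1 E \<and> bil E" by blast
next
  assume "\<exists>E. \<omega> = mk1 E \<and> bil E"
  then show "\<omega> \<in> Cd 1" by (auto simp: cochains1_iff cochains1_iff' lin_D_iff mk1_off bil_def)
qed

lemma Cd2_iff: "\<omega> \<in> Cd 2 \<longleftrightarrow> (\<exists>W. \<omega> = mk2 W \<and> tril W \<and> (\<forall>a c. W a a c = 0))"
proof
  assume h: "\<omega> \<in> Cd 2"
  then have "\<omega> = mk2 (\<lambda>a b. \<omega> [a, b])" by (intro rep2) (simp add: cochains2_iff)
  moreover have "tril (\<lambda>a b. \<omega> [a, b])" using h by (simp add: cochains2_iff lin_D_iff tril_def)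
  moreover have "\<forall>a c. \<omega> [a, a] c = 0" using h by (simp add: cochains2_iff)
  ultimately show "\<exists>W. \<omega> = mk2 W \<and> tril W \<and> (\<forall>a c. W a a c = 0)" by blast
next
  assume "\<exists>W. \<omega> = mk2 W \<and> tril W \<and> (\<forall>a c. W a a c = 0)"
  then obtain W where e: "\<omega> = mk2 W" and W: "tril W" "\<forall>a c. W a a c = 0" by blast
  show "\<omega> \<in> Cd 2" using W unfolding e by (simp add: cochains2_iff lin_D_iff mk2_off tril_def fun_eq_iff)
qed

lemma Cs0_iff: "\<omega> \<in> Cs 0 \<longleftrightarrow> (\<exists>\<kappa>. \<omega> = mk0 \<kappa> \<and> \<kappa> \<in> sym2 sV)"
proof
  assume h: "\<omega> \<in> Cs 0"
  then have "\<omega> = mk0 (\<omega> [])" by (intro rep0) (simp add: cochains0_iff)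
  then show "\<exists>\<kappa>. \<omega> = mk0 \<kappa> \<and> \<kappa> \<in> sym2 sV" using h by (auto simp: cochains0_iff)
next
  assume "\<exists>\<kappa>. \<omega> = mk0 \<kappa> \<and> \<kappa> \<in> sym2 sV"
  then show "\<omega> \<in> Cs 0" by (auto simp: cochains0_iff mk0_def)
qed

lemma Cs1_iff: "\<omega> \<in> Cs 1 \<longleftrightarrow> (\<exists>P. \<omega> = mk1 P \<and> tril P \<and> (\<forall>a b c. P a b c = P a c b))"
proof
  assume h: "\<omega> \<in> Cs 1"
  then have "\<omega> = mk1 (\<lambda>a. \<omega> [a])" by (intro rep1) (use h in \<open>unfold cochains1_iff, blast\<close>)
  moreover have "tril (\<lambda>a. \<omega> [a])" using h unfolding cochains1_iff by (simp add: lin_S_iff tril_def sym2_def dual_space_def)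
  moreover have "\<forall>a b c. \<omega> [a] b c = \<omega> [a] c b" using h unfolding cochains1_iff by (simp add: sym2_def)
  ultimately show "\<exists>P. \<omega> = mk1 P \<and> tril P \<and> (\<forall>a b c. P a b c = P a c b)" by blast
next
  assume "\<exists>P. \<omega> = mk1 P \<and> tril P \<and> (\<forall>a b c. P a b c = P a c b)"
  then show "\<omega> \<in> Cs 1" by (auto simp: cochains1_iff cochains1_iff' lin_S_iff mk1_off tril_def sym2_def dual_space_def)
qed

end

lemma mod_K: "module ((*) :: 'k::field \<Rightarrow> 'k \<Rightarrow> 'k)" using vs_K by (simp add: module_iff_vector_space)
lemma mod_D: "module (dual_scale :: 'k::field \<Rightarrow> ('v \<Rightarrow> 'k) \<Rightarrow> _)" using vs_D by (simp add: module_iff_vector_space)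
lemma mod_S: "module (sym_scale :: 'k::field \<Rightarrow> ('v \<Rightarrow> 'v \<Rightarrow> 'k) \<Rightarrow> _)" using vs_S by (simp add: module_iff_vector_space)

lemma ext1: "(\<And>a. f [a] = g [a]) \<Longrightarrow> (\<And>xs. length xs \<noteq> 1 \<Longrightarrow> f xs = g xs) \<Longrightarrow> f = g"
  by (metis ext len1 One_nat_def)
lemma ext2: "(\<And>a b. f [a, b] = g [a, b]) \<Longrightarrow> (\<And>xs. length xs \<noteq> 2 \<Longrightarrow> f xs = g xs) \<Longrightarrow> f = g"
  by (metis ext len2)
lemma ext3: "(\<And>a b c. f [a, b, c] = g [a, b, c]) \<Longrightarrow> (\<And>xs. length xs \<noteq> 3 \<Longrightarrow> f xs = g xs) \<Longrightarrow> f = g"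
  by (metis ext len3)
lemma ext4: "(\<And>a b c d. f [a, b, c, d] = g [a, b, c, d]) \<Longrightarrow> (\<And>xs. length xs \<noteq> 4 \<Longrightarrow> f xs = g xs) \<Longrightarrow> f = g"
  by (metis ext len4)

lemmas cd1' = cd1[unfolded One_nat_def]

context LA begin

lemma dT1: "ce_diff br (*) triv_act 1 (mk1 l) = mk2 (\<lambda>x y. - l (br x y))"
  by (rule ext2) (simp_all add: cd1[OF mod_K] cd1'[OF mod_K] triv_act_def cd_len mk2_off)

lemma dT2: "ce_diff br (*) triv_act 2 (mk2 f) = mk3 (\<lambda>x y z. - f (br x y) z + f (br x z) y - f (br y z) x)"
  by (rule ext3) (simp_all add: cd2[OF mod_K] triv_act_def cd_len mk3_off)

lemma dT3: "ce_diff br (*) triv_act 3 (mk3 f) = 0 \<longleftrightarrow> (\<forall>x y z w.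
   - f (br x y) z w + f (br x z) y w - f (br y z) x w - f (br x w) y z + f (br y w) x z - f (br z w) x y = 0)"
proof
  assume h: "ce_diff br (*) triv_act 3 (mk3 f) = 0"
  show "\<forall>x y z w. - f (br x y) z w + f (br x z) y w - f (br y z) x w - f (br x w) y z + f (br y w) x z - f (br z w) x y = 0"
  proof (intro allI)
    fix x y z w
    have "ce_diff br (*) triv_act 3 (mk3 f) [x, y, z, w] = 0" using h by simp
    then show "- f (br x y) z w + f (br x z) y w - f (br y z) x w - f (br x w) y z + f (br y w) x z - f (br z w) x y = 0"
      by (simp add: cd3[OF mod_K] triv_act_def)
  qed
next
  assume h: "\<forall>x y z w. - f (br x y) z w + f (br x z) y w - f (br y z) x w - f (br x w) y z + f (br y w) x z - f (br z w) x y = 0"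
  show "ce_diff br (*) triv_act 3 (mk3 f) = 0"
    by (rule ext4) (use h in \<open>simp_all add: cd3[OF mod_K] triv_act_def cd_len\<close>)
qed

lemma dD0: "ce_diff br dual_scale (dual_act br) 0 (mk0 l) = mk1 (\<lambda>x y. - l (br x y))"
  by (rule ext1) (simp_all add: cd0[OF mod_D] dual_act_def cd_len mk1_off)

lemma dD1: "ce_diff br dual_scale (dual_act br) 1 (mk1 E) = mk2 (\<lambda>x y z. - E y (br x z) + E x (br y z) - E (br x y) z)"
  by (rule ext2) (simp_all add: cd1[OF mod_D] cd1'[OF mod_D] dual_act_def cd_len mk2_off fun_eq_iff)

lemma dD2: "ce_diff br dual_scale (dual_act br) 2 (mk2 W) = 0 \<longleftrightarrow> (\<forall>x y z t.
   - W y z (br x t) + W x z (br y t) - W x y (br z t) - W (br x y) z t + W (br x z) y t - W (br y z) x t = 0)"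
proof
  assume h: "ce_diff br dual_scale (dual_act br) 2 (mk2 W) = 0"
  show "\<forall>x y z t. - W y z (br x t) + W x z (br y t) - W x y (br z t) - W (br x y) z t + W (br x z) y t - W (br y z) x t = 0"
  proof (intro allI)
    fix x y z t
    have "ce_diff br dual_scale (dual_act br) 2 (mk2 W) [x, y, z] t = 0" using h by simp
    then show "- W y z (br x t) + W x z (br y t) - W x y (br z t) - W (br x y) z t + W (br x z) y t - W (br y z) x t = 0"
      by (simp add: cd2[OF mod_D] dual_act_def)
  qed
next
  assume h: "\<forall>x y z t. - W y z (br x t) + W x z (br y t) - W x y (br z t) - W (br x y) z t + W (br x z) y t - W (br y z) x t = 0"
  show "ce_diff br dual_scale (dual_act br) 2 (mk2 W) = 0"
    by (rule ext3) (use h in \<open>simp_all add: cd2[OF mod_D] dual_act_def cd_len fun_eq_iff\<close>)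
qed

lemma dS0: "ce_diff br sym_scale (sym_act br) 0 (mk0 \<kappa>) = mk1 (\<lambda>x. sym_act br x \<kappa>)"
  by (rule ext1) (simp_all add: cd0[OF mod_S] cd_len mk1_off)

lemma dS1: "ce_diff br sym_scale (sym_act br) 1 (mk1 P) = 0 \<longleftrightarrow> (\<forall>x y a b.
   - P y (br x a) b - P y a (br x b) + P x (br y a) b + P x a (br y b) - P (br x y) a b = 0)"
proof
  assume h: "ce_diff br sym_scale (sym_act br) 1 (mk1 P) = 0"
  show "\<forall>x y a b. - P y (br x a) b - P y a (br x b) + P x (br y a) b + P x a (br y b) - P (br x y) a b = 0"
  proof (intro allI)
    fix x y a b
    have "ce_diff br sym_scale (sym_act br) 1 (mk1 P) [x, y] a b = 0" using h by simp
    then show "- P y (br x a) b - P y a (br x b) + P x (br y a) b + P x a (br y b) - P (br x y) a b = 0"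
      by (simp add: cd1[OF mod_S] cd1'[OF mod_S] sym_act_def algebra_simps)
  qed
next
  assume h: "\<forall>x y a b. - P y (br x a) b - P y a (br x b) + P x (br y a) b + P x a (br y b) - P (br x y) a b = 0"
  show "ce_diff br sym_scale (sym_act br) 1 (mk1 P) = 0"
  proof (rule ext2)
    fix x y
    show "ce_diff br sym_scale (sym_act br) 1 (mk1 P) [x, y] = 0 [x, y]"
    proof (simp add: fun_eq_iff, intro allI)
      fix a b
      have "- P y (br x a) b - P y a (br x b) + P x (br y a) b + P x a (br y b) - P (br x y) a b = 0" using h by blast
      then show "ce_diff br sym_scale (sym_act br) (Suc 0) (mk1 P) [x, y] a b = 0"
        by (simp add: cd1[OF mod_S] cd1'[OF mod_S] sym_act_def algebra_simps)
    qed
  qed (simp add: cd_len)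
qed

end

lemma cob1: "coboundaries sV br sM act A 1 = ce_diff br sM act 0 ` cochains sV sM A 0"
  by (simp add: coboundaries_def)
lemma cob2: "coboundaries sV br sM act A 2 = ce_diff br sM act 1 ` cochains sV sM A 1"
  by (simp add: coboundaries_def)
lemma cob3: "coboundaries sV br sM act A 3 = ce_diff br sM act 2 ` cochains sV sM A 2"
  by (simp add: coboundaries_def)

lemma image_char:
  assumes C: "\<And>\<theta>. \<theta> \<in> C \<longleftrightarrow> (\<exists>a. \<theta> = m a \<and> P a)" and d: "\<And>a. d (m a) = g a"
  shows "\<omega> \<in> d ` C \<longleftrightarrow> (\<exists>a. P a \<and> \<omega> = g a)"
proof
  assume "\<omega> \<in> d ` C"
  then obtain \<theta> where "\<theta> \<in> C" "\<omega> = d \<theta>" by blast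
  then obtain a where "\<theta> = m a" "P a" using C by blast
  then show "\<exists>a. P a \<and> \<omega> = g a" using \<open>\<omega> = d \<theta>\<close> d by blast
next
  assume "\<exists>a. P a \<and> \<omega> = g a"
  then obtain a where a: "P a" "\<omega> = g a" by blast
  then have "m a \<in> C" using C by blast
  moreover have "\<omega> = d (m a)" using a d by simp
  ultimately show "\<omega> \<in> d ` C" by blast
qed

lemma cocy_char:
  assumes C: "\<And>\<theta>. \<theta> \<in> C \<longleftrightarrow> (\<exists>a. \<theta> = m a \<and> P a)" and d: "\<And>a. d (m a) = 0 \<longleftrightarrow> Q a"
  shows "\<omega> \<in> {\<theta> \<in> C. d \<theta> = 0} \<longleftrightarrow> (\<exists>a. \<omega> = m a \<and> P a \<and> Q a)"
proof
  assume "\<omega> \<in> {\<theta> \<in> C. d \<theta> = 0}"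
  then have "\<omega> \<in> C" "d \<omega> = 0" by auto
  then obtain a where "\<omega> = m a" "P a" using C by blast
  then show "\<exists>a. \<omega> = m a \<and> P a \<and> Q a" using \<open>d \<omega> = 0\<close> d by blast
next
  assume "\<exists>a. \<omega> = m a \<and> P a \<and> Q a"
  then obtain a where a: "\<omega> = m a" "P a" "Q a" by blast
  then have "\<omega> \<in> C" using C by blast
  moreover have "d \<omega> = 0" using a d by simp
  ultimately show "\<omega> \<in> {\<theta> \<in> C. d \<theta> = 0}" by blast
qed

context LA begin

lemma Bt2_iff: "\<omega> \<in> Btriv sV br 2 \<longleftrightarrow> (\<exists>l. l \<in> dual_space sV \<and> \<omega> = mk2 (\<lambda>x y. - l (br x y)))"
  unfolding cob2 by (rule image_char[OF Ct1_iff]) (rule dT1)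

lemma Bt3_iff: "\<omega> \<in> Btriv sV br 3 \<longleftrightarrow> (\<exists>f. (bil f \<and> (\<forall>a. f a a = 0)) \<and>
   \<omega> = mk3 (\<lambda>x y z. - f (br x y) z + f (br x z) y - f (br y z) x))"
  unfolding cob3 by (rule image_char[OF Ct2_iff]) (rule dT2)

lemma Bd1_iff: "\<omega> \<in> Bdual sV br 1 \<longleftrightarrow> (\<exists>l. l \<in> dual_space sV \<and> \<omega> = mk1 (\<lambda>x y. - l (br x y)))"
  unfolding cob1 by (rule image_char[OF Cd0_iff]) (rule dD0)

lemma Bd2_iff: "\<omega> \<in> Bdual sV br 2 \<longleftrightarrow> (\<exists>E. bil E \<and> \<omega> = mk2 (\<lambda>x y z. - E y (br x z) + E x (br y z) - E (br x y) z))"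
  unfolding cob2 by (rule image_char[OF Cd1_iff]) (rule dD1)

lemma Bs1_iff: "\<omega> \<in> Bsym sV br 1 \<longleftrightarrow> (\<exists>\<kappa>. \<kappa> \<in> sym2 sV \<and> \<omega> = mk1 (\<lambda>x. sym_act br x \<kappa>))"
  unfolding cob1 by (rule image_char[OF Cs0_iff]) (rule dS0)

abbreviation "Zt p \<equiv> cocycles sV br ((*) :: 'k \<Rightarrow> 'k \<Rightarrow> 'k) triv_act UNIV p"
abbreviation "Zd p \<equiv> cocycles sV br (dual_scale :: 'k \<Rightarrow> ('v \<Rightarrow> 'k) \<Rightarrow> _) (dual_act br) (dual_space sV) p"
abbreviation "Zs p \<equiv> cocycles sV br (sym_scale :: 'k \<Rightarrow> ('v \<Rightarrow> 'v \<Rightarrow> 'k) \<Rightarrow> _) (sym_act br) (sym2 sV) p"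

lemma dT2z: "ce_diff br (*) triv_act 2 (mk2 f) = 0 \<longleftrightarrow> (\<forall>x y z. - f (br x y) z + f (br x z) y - f (br y z) x = 0)"
  unfolding dT2 mk3_eq[of _ "\<lambda>x y z. 0", unfolded mk3_zero] by (simp add: fun_eq_iff)

lemma dD1z: "ce_diff br dual_scale (dual_act br) 1 (mk1 E) = 0 \<longleftrightarrow> (\<forall>x y z. - E y (br x z) + E x (br y z) - E (br x y) z = 0)"
  unfolding dD1 mk2_eq[of _ "\<lambda>x y. 0", unfolded mk2_zero] by (simp add: fun_eq_iff)

lemma Zt2_iff: "\<omega> \<in> Zt 2 \<longleftrightarrow> (\<exists>f. \<omega> = mk2 f \<and> (bil f \<and> (\<forall>a. f a a = 0)) \<and>
   (\<forall>x y z. - f (br x y) z + f (br x z) y - f (br y z) x = 0))"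
  unfolding cocycles_def by (rule cocy_char[OF Ct2_iff]) (rule dT2z)

lemma Zt3_iff: "\<omega> \<in> Zt 3 \<longleftrightarrow> (\<exists>f. \<omega> = mk3 f \<and> (tril f \<and> alt3 f) \<and> (\<forall>x y z w.
   - f (br x y) z w + f (br x z) y w - f (br y z) x w - f (br x w) y z + f (br y w) x z - f (br z w) x y = 0))"
  unfolding cocycles_def by (rule cocy_char[OF Ct3_iff]) (rule dT3)

lemma Zd1_iff: "\<omega> \<in> Zd 1 \<longleftrightarrow> (\<exists>E. \<omega> = mk1 E \<and> bil E \<and>
   (\<forall>x y z. - E y (br x z) + E x (br y z) - E (br x y) z = 0))"
  unfolding cocycles_def by (rule cocy_char[OF Cd1_iff]) (rule dD1z)

lemma Zd2_iff: "\<omega> \<in> Zd 2 \<longleftrightarrow> (\<exists>W. \<omega> = mk2 W \<and> (tril W \<and> (\<forall>a c. W a a c = 0)) \<and> (\<forall>x y z t.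
   - W y z (br x t) + W x z (br y t) - W x y (br z t) - W (br x y) z t + W (br x z) y t - W (br y z) x t = 0))"
  unfolding cocycles_def by (rule cocy_char[OF Cd2_iff]) (rule dD2)

lemma Zs1_iff: "\<omega> \<in> Zs 1 \<longleftrightarrow> (\<exists>P. \<omega> = mk1 P \<and> (tril P \<and> (\<forall>a b c. P a b c = P a c b)) \<and> (\<forall>x y a b.
   - P y (br x a) b - P y a (br x b) + P x (br y a) b + P x a (br y b) - P (br x y) a b = 0))"
  unfolding cocycles_def by (rule cocy_char[OF Cs1_iff]) (rule dS1)

end

context LA begin

lemma lc: "(a::'a::ab_group_add) - b = c \<Longrightarrow> c = 0 \<Longrightarrow> a = b" by simp

lemma anti2: assumes "bil f" "\<And>a. f a a = 0" shows "f b a = - f a b"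
proof -
  have "f (a + b) (a + b) = f a a + f b a + (f a b + f b b)" by (simp add: bil_simps[OF assms(1)])
  then have "f b a + f a b = 0" using assms(2) by simp
  then show ?thesis by (simp add: add_eq_0_iff)
qed

lemma tril_bil12: "tril t \<Longrightarrow> bil (\<lambda>a b. t a b c)"
  by (simp add: tril_def bil_def)
lemma tril_bil23: "tril t \<Longrightarrow> bil (\<lambda>b c. t a b c)"
  by (simp add: tril_def bil_def)

lemma alt3_12: assumes "tril t" "alt3 t" shows "t b a c = - t a b c"
proof -
  have h: "\<And>a. t a a c = 0" using assms(2) by (simp add: alt3_def)
  show ?thesis by (rule anti2[OF tril_bil12[OF assms(1)] h])
qed
lemma alt3_23: assumes "tril t" "alt3 t" shows "t a c b = - t a b c"
proof -
  have h: "\<And>b. t a b b = 0" using assms(2) by (simp add: alt3_def)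
  show ?thesis by (rule anti2[OF tril_bil23[OF assms(1)] h])
qed
lemma alt3_cyc: assumes "tril t" "alt3 t" shows "t u y z = t y z u"
  using alt3_12[OF assms, of y u z] alt3_23[OF assms, of y u z] by simp

lemma W_anti: assumes "tril W" "\<And>a c. W a a c = 0" shows "W b a c = - W a b c"
  by (rule anti2[OF tril_bil12[OF assms(1)] assms(2)])

lemma sym2_bil: "\<kappa> \<in> sym2 sV \<Longrightarrow> bil \<kappa>" by (simp add: sym2_iff)
lemma sym2_sym: "\<kappa> \<in> sym2 sV \<Longrightarrow> \<kappa> y z = \<kappa> z y" by (simp add: sym2_iff)
lemma inv_eq: "\<kappa> \<in> sym2_inv sV br \<Longrightarrow> \<kappa> (br x y) z = - \<kappa> y (br x z)"
proof -
  assume "\<kappa> \<in> sym2_inv sV br"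
  then have "sym_act br x \<kappa> y z = 0" by (simp add: sym2_inv_def)
  then have "- \<kappa> (br x y) z = \<kappa> y (br x z)" by (simp add: sym_act_def)
  then show ?thesis by (metis minus_minus)
qed
lemma inv_assoc: assumes "\<kappa> \<in> sym2_inv sV br" shows "\<kappa> (br a b) c = \<kappa> a (br b c)"
proof -
  have k: "\<kappa> \<in> sym2 sV" using assms by (simp add: sym2_inv_def)
  have "\<kappa> (br b a) c = - \<kappa> a (br b c)" by (rule inv_eq[OF assms])
  moreover have "\<kappa> (br b a) c = - \<kappa> (br a b) c" using br_anti[of a b] bil_neg1[OF sym2_bil[OF k]] by simp
  ultimately show ?thesis by simp
qed

lemma F1: assumes "bil f" "\<And>a. f a a = 0" and c: "\<And>x y z. - f (br x y) z + f (br x z) y - f (br y z) x = 0"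
  shows "- f y (br x z) + f x (br y z) - f (br x y) z = 0"
proof -
  have "- f (br x y) z + f (br x z) y - f (br y z) x = 0" by (rule c)
  moreover have "f (br x z) y = - f y (br x z)" "f (br y z) x = - f x (br y z)" using anti2[OF assms(1,2)] by blast+
  ultimately show ?thesis by (simp add: algebra_simps)
qed

lemma F2: assumes "tril f" "alt3 f" and c: "\<And>x y z w. - f (br x y) z w + f (br x z) y w - f (br y z) x w - f (br x w) y z + f (br y w) x z - f (br z w) x y = 0"
  shows "- f y z (br x t) + f x z (br y t) - f x y (br z t) - f (br x y) z t + f (br x z) y t - f (br y z) x t = 0"
proof -
  have "- f (br x y) z t + f (br x z) y t - f (br y z) x t - f (br x t) y z + f (br y t) x z - f (br z t) x y = 0" by (rule c)
  moreover have "f (br x t) y z = f y z (br x t)" "f (br y t) x z = f x z (br y t)" "f (br z t) x y = f x y (br z t)"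
    using alt3_cyc[OF assms(1,2)] by blast+
  ultimately show ?thesis by (simp add: algebra_simps)
qed

lemma F3: assumes "bil f" "\<And>a. f a a = 0"
  shows "(\<lambda>x y z. - f (br x y) z + f (br x z) y - f (br y z) x) = (\<lambda>x y z. - f y (br x z) + f x (br y z) - f (br x y) z)"
proof (intro ext)
  fix x y z
  have "f (br x z) y = - f y (br x z)" "f (br y z) x = - f x (br y z)" using anti2[OF assms] by blast+
  then show "- f (br x y) z + f (br x z) y - f (br y z) x = - f y (br x z) + f x (br y z) - f (br x y) z"
    by (simp add: algebra_simps)
qed

lemma F4: assumes E: "bil E" and c: "\<And>x y z. - E y (br x z) + E x (br y z) - E (br x y) z = 0"
  shows "(\<lambda>y z. E y z + E z y) \<in> sym2_inv sV br"
proof -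
  have s: "(\<lambda>y z. E y z + E z y) \<in> sym2 sV"
    unfolding sym2_iff by (auto intro!: bilI simp: bil_simps[OF E] algebra_simps)
  have "sym_act br x (\<lambda>y z. E y z + E z y) = 0" for x
  proof (intro ext)
    fix y z
    have c1: "- E y (br x z) + E x (br y z) - E (br x y) z = 0" by (rule c)
    have c2: "- E z (br x y) + E x (br z y) - E (br x z) y = 0" by (rule c)
    have a: "E x (br y z) + E x (br z y) = 0" using br_anti[of y z] bil_neg2[OF E] by simp
    show "sym_act br x (\<lambda>y z. E y z + E z y) y z = 0 y z"
      unfolding sym_act_def
    proof (rule lc[where c = "(- E y (br x z) + E x (br y z) - E (br x y) z) + (- E z (br x y) + E x (br z y) - E (br x z) y)
                        - (E x (br y z) + E x (br z y))"])
      show "- (E (br x y) z + E z (br x y)) - (E y (br x z) + E (br x z) y) - 0 y z =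
        - E y (br x z) + E x (br y z) - E (br x y) z + (- E z (br x y) + E x (br z y) - E (br x z) y) - (E x (br y z) + E x (br z y))"
        by (simp add: algebra_simps)
      show "- E y (br x z) + E x (br y z) - E (br x y) z + (- E z (br x y) + E x (br z y) - E (br x z) y) - (E x (br y z) + E x (br z y)) = 0"
        by (simp only: c1 c2 a) simp
    qed
  qed
  then show ?thesis using s by (simp add: sym2_inv_def)
qed

end

context LA begin

lemma F5: assumes l: "l \<in> dual_space sV" shows "S_map (mk1 (\<lambda>x y. - l (br x y))) = 0"
proof (intro ext)
  fix y z
  have a: "l (br z y) = - l (br y z)" using br_anti[of y z] dual_neg[OF l] by simp
  show "S_map (mk1 (\<lambda>x y. - l (br x y))) y z = 0 y z" by (simp add: S_mk a)
qed

lemma F6_tril: assumes k: "\<kappa> \<in> sym2 sV" shows "tril (\<lambda>x y z. \<kappa> (br x y) z)"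
  unfolding tril_def using sym2_bil[OF k]
  by (auto intro!: dualI simp: br_simps bil_simps[OF sym2_bil[OF k]])

lemma two_zero: assumes "(2::'k) \<noteq> 0" "(a::'k) + a = 0" shows "a = 0"
proof -
  have "2 * a = 0" by (simp only: mult_2 assms(2))
  then show ?thesis using assms(1) by simp
qed

lemma F6_alt: assumes k: "\<kappa> \<in> sym2_inv sV br" and two: "(2::'k) \<noteq> 0"
  shows "alt3 (\<lambda>x y z. \<kappa> (br x y) z)"
proof -
  have k2: "\<kappa> \<in> sym2 sV" using k by (simp add: sym2_inv_def)
  have "\<kappa> (br x x) z = 0" for x z by (simp add: br_alt bil_zero1[OF sym2_bil[OF k2]])
  moreover have "\<kappa> (br x y) x = 0" for x y using inv_eq[OF k, of x y x] by (simp add: br_alt bil_zero2[OF sym2_bil[OF k2]])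
  moreover have "\<kappa> (br x y) y = 0" for x y
  proof -
    have "\<kappa> (br x y) y = - \<kappa> y (br x y)" by (rule inv_eq[OF k])
    also have "\<kappa> y (br x y) = \<kappa> (br x y) y" by (rule sym2_sym[OF k2])
    finally have "\<kappa> (br x y) y + \<kappa> (br x y) y = 0" by simp
    then show ?thesis using two_zero[OF two] by blast
  qed
  ultimately show ?thesis by (simp add: alt3_def)
qed

lemma jac': "br x (br y t) - br y (br x t) - br (br x y) t = 0"
proof -
  have j: "br x (br y t) + br y (br t x) + br t (br x y) = 0" by (rule jacobi)
  have a1: "br t x = - br x t" by (rule br_anti)
  have a2: "br t (br x y) = - br (br x y) t" by (rule br_anti)
  show ?thesis using j unfolding a1 a2 br_neg2 by (simp add: algebra_simps)
qed

lemma F6_cyc: assumes k: "\<kappa> \<in> sym2_inv sV br"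
  shows "- \<kappa> (br (br x y) z) w + \<kappa> (br (br x z) y) w - \<kappa> (br (br y z) x) w - \<kappa> (br (br x w) y) z + \<kappa> (br (br y w) x) z - \<kappa> (br (br z w) x) y = 0"
proof -
  have k2: "\<kappa> \<in> sym2 sV" using k by (simp add: sym2_inv_def)
  note ia = inv_assoc[OF k] and sy = sym2_sym[OF k2]
  have e1: "\<kappa> (br (br x y) z) w = \<kappa> x (br y (br z w))" by (simp add: ia)
  have e2: "\<kappa> (br (br x z) y) w = \<kappa> x (br z (br y w))" by (simp add: ia)
  have e3: "\<kappa> (br (br y z) x) w = \<kappa> x (br w (br y z))" using ia sy by metis
  have e4: "\<kappa> (br (br x w) y) z = \<kappa> x (br w (br y z))" by (simp add: ia)
  have e5: "\<kappa> (br (br y w) x) z = \<kappa> x (br z (br y w))" using ia sy by metis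
  have e6: "\<kappa> (br (br z w) x) y = \<kappa> x (br y (br z w))" using ia sy by metis
  have b: "br y (br z w) - br z (br y w) + br w (br y z) = 0"
  proof -
    have j: "br y (br z w) + br z (br w y) + br w (br y z) = 0" by (rule jacobi)
    have a1: "br w y = - br y w" by (rule br_anti)
    show ?thesis using j unfolding a1 br_neg2 by (simp add: algebra_simps)
  qed
  have j: "\<kappa> x (br y (br z w)) - \<kappa> x (br z (br y w)) + \<kappa> x (br w (br y z)) = 0"
    using arg_cong[OF b, of "\<kappa> x"] by (simp add: bil_simps[OF sym2_bil[OF k2]])
  show ?thesis unfolding e1 e2 e3 e4 e5 e6
    by (rule lc[where c = "- (\<kappa> x (br y (br z w)) - \<kappa> x (br z (br y w)) + \<kappa> x (br w (br y z))) - (\<kappa> x (br y (br z w)) - \<kappa> x (br z (br y w)) + \<kappa> x (br w (br y z)))"]) (simp add: algebra_simps, simp only: j j add_0_left add_0_right diff_0_right diff_0 minus_zero mult_zero_right mult_zero_left diff_self)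
qed

lemma F7: assumes t: "tril W" and a: "\<And>a c. W a a c = 0"
  and c: "\<And>x y z t. - W y z (br x t) + W x z (br y t) - W x y (br z t) - W (br x y) z t + W (br x z) y t - W (br y z) x t = 0"
  shows "- (W y (br x a) b + W y b (br x a)) - (W y a (br x b) + W y (br x b) a) + (W x (br y a) b + W x b (br y a))
    + (W x a (br y b) + W x (br y b) a) - (W (br x y) a b + W (br x y) b a) = 0"
proof -
  have C1: "- W y a (br x b) + W x a (br y b) - W x y (br a b) - W (br x y) a b + W (br x a) y b - W (br y a) x b = 0" by (rule c)
  have C2: "- W y b (br x a) + W x b (br y a) - W x y (br b a) - W (br x y) b a + W (br x b) y a - W (br y b) x a = 0" by (rule c)
  note wa = W_anti[OF t a]
  have w1: "W (br x a) y b + W y (br x a) b = 0" using wa[where b="br x a" and a="y" and c="b"] by simp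
  have w2: "W (br y a) x b + W x (br y a) b = 0" using wa[where b="br y a" and a="x" and c="b"] by simp
  have w3: "W (br x b) y a + W y (br x b) a = 0" using wa[where b="br x b" and a="y" and c="a"] by simp
  have w4: "W (br y b) x a + W x (br y b) a = 0" using wa[where b="br y b" and a="x" and c="a"] by simp
  have w5: "W x y (br a b) + W x y (br b a) = 0" using br_anti[of a b] tril_neg3[OF t] by simp
  show ?thesis
    by (rule lc[where c = "(- W y a (br x b) + W x a (br y b) - W x y (br a b) - W (br x y) a b + W (br x a) y b - W (br y a) x b) + (- W y b (br x a) + W x b (br y a) - W x y (br b a) - W (br x y) b a + W (br x b) y a - W (br y b) x a) - (W (br x a) y b + W y (br x a) b) + (W (br y a) x b + W x (br y a) b) - (W (br x b) y a + W y (br x b) a) + (W (br y b) x a + W x (br y b) a) + (W x y (br a b) + W x y (br b a))"]) (simp add: algebra_simps, simp only: C1 C2 w1 w2 w3 w4 w5 add_0_left add_0_right diff_0_right diff_0 minus_zero mult_zero_right mult_zero_left diff_self)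
qed

lemma F8: assumes E: "bil E"
  shows "(- E y (br x z) + E x (br y z) - E (br x y) z) + (- E z (br x y) + E x (br z y) - E (br x z) y)
     = sym_act br x (\<lambda>y z. E y z + E z y) y z"
proof -
  have z1: "E x (br y z) + E x (br z y) = 0" using br_anti[of y z] bil_neg2[OF E] by simp
  show ?thesis unfolding sym_act_def
    by (rule lc[where c = "(E x (br y z) + E x (br z y))"]) (simp add: algebra_simps, simp only: z1 add_0_left add_0_right diff_0_right diff_0 minus_zero mult_zero_right mult_zero_left diff_self)
qed

lemma chain_eq: assumes t: "tril f" "alt3 f"
  shows "- f (br x y) z t + f (br x z) y t - f (br y z) x t - f (br x t) y z + f (br y t) x z - f (br z t) x y
    = - f y z (br x t) + f x z (br y t) - f x y (br z t) - f (br x y) z t + f (br x z) y t - f (br y z) x t"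
  using alt3_cyc[OF t, of "br x t" y z] alt3_cyc[OF t, of "br y t" x z] alt3_cyc[OF t, of "br z t" x y]
  by (simp add: algebra_simps)

lemma DD: assumes E: "bil E" and D: "\<And>x y z. D x y z = - E y (br x z) + E x (br y z) - E (br x y) z"
  shows "- D y z (br x t) + D x z (br y t) - D x y (br z t) - D (br x y) z t + D (br x z) y t - D (br y z) x t = 0"
proof -
  note bs = bil_simps[OF E]
  have b1: "br y (br x t) - br x (br y t) + br (br x y) t = 0"
    using jac'[of x y t] by (simp add: algebra_simps)
  have b2: "- br z (br x t) + br x (br z t) - br (br x z) t = 0"
    using jac'[of x z t] by (simp add: algebra_simps)
  have b3: "br z (br y t) - br y (br z t) + br (br y z) t = 0"
    using jac'[of y z t] by (simp add: algebra_simps)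
  have b4: "br (br x y) z - br (br x z) y + br (br y z) x = 0"
  proof -
    have j: "br x (br y z) + br y (br z x) + br z (br x y) = 0" by (rule jacobi)
    have a1: "br (br x y) z = - br z (br x y)" by (rule br_anti)
    have a2: "br (br x z) y = - br y (br x z)" by (rule br_anti)
    have a3: "br (br y z) x = - br x (br y z)" by (rule br_anti)
    have a4: "br z x = - br x z" by (rule br_anti)
    show ?thesis using j unfolding a1 a2 a3 a4 br_neg2 by (simp add: algebra_simps)
  qed
  have Jz: "E z (br y (br x t)) - E z (br x (br y t)) + E z (br (br x y) t) = 0"
    using arg_cong[OF b1, of "E z"] by (simp add: bs)
  have Jy: "- E y (br z (br x t)) + E y (br x (br z t)) - E y (br (br x z) t) = 0"
    using arg_cong[OF b2, of "E y"] by (simp add: bs)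
  have Jx: "E x (br z (br y t)) - E x (br y (br z t)) + E x (br (br y z) t) = 0"
    using arg_cong[OF b3, of "E x"] by (simp add: bs)
  have Jt: "E (br (br x y) z) t - E (br (br x z) y) t + E (br (br y z) x) t = 0"
    using arg_cong[OF b4, of "\<lambda>u. E u t"] by (simp add: bs)
  show ?thesis unfolding D
    by (rule lc[where c = "(E z (br y (br x t)) - E z (br x (br y t)) + E z (br (br x y) t)) + (- E y (br z (br x t)) + E y (br x (br z t)) - E y (br (br x z) t)) + (E x (br z (br y t)) - E x (br y (br z t)) + E x (br (br y z) t)) + (E (br (br x y) z) t - E (br (br x z) y) t + E (br (br y z) x) t)"]) (simp add: algebra_simps, simp only: Jz Jy Jx Jt add_0_left add_0_right diff_0_right diff_0 minus_zero mult_zero_right mult_zero_left diff_self)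
qed

end

context LA begin

lemma tril_plus: assumes "tril f" "tril g" shows "tril (\<lambda>a b c. f a b c + g a b c)"
  unfolding tril_def by (auto intro!: dualI simp: tril_simps[OF assms(1)] tril_simps[OF assms(2)] algebra_simps)
lemma tril_minus: assumes "tril f" "tril g" shows "tril (\<lambda>a b c. f a b c - g a b c)"
  unfolding tril_def by (auto intro!: dualI simp: tril_simps[OF assms(1)] tril_simps[OF assms(2)] algebra_simps)
lemma tril_swap: assumes "tril f" shows "tril (\<lambda>a b c. f a c b)"
  using assms unfolding tril_def by auto

lemma D_tril: assumes E: "bil E" shows "tril (\<lambda>x y z. - E y (br x z) + E x (br y z) - E (br x y) z)"
  unfolding tril_def by (auto intro!: dualI simp: bil_simps[OF E] br_simps algebra_simps)

lemma half: assumes "(2::'k) \<noteq> 0" shows "inverse 2 + inverse 2 = (1::'k)"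
proof -
  have "2 * inverse (2::'k) = 1" using assms by simp
  then show ?thesis by (simp only: mult_2)
qed

lemma X3a: assumes E: "bil E" and c: "\<And>x y z. - E y (br x z) + E x (br y z) - E (br x y) z = 0"
  shows "(\<lambda>x y z. E (br x y) z + E z (br x y)) = (\<lambda>x y z. - (E z (br x y) - E (br x y) z) + (E y (br x z) - E (br x z) y) - (E x (br y z) - E (br y z) x))"
proof (intro ext)
  fix x y z
  have c1: "- E z (br x y) + E x (br z y) - E (br x z) y = 0" by (rule c)
  have c2: "- E z (br y x) + E y (br z x) - E (br y z) x = 0" by (rule c)
  have z1: "E z (br y x) + E z (br x y) = 0" using br_anti[of x y] bil_neg2[OF E] by simp
  have z2: "E x (br z y) + E x (br y z) = 0" using br_anti[of y z] bil_neg2[OF E] by simp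
  have z3: "E y (br z x) + E y (br x z) = 0" using br_anti[of x z] bil_neg2[OF E] by simp
  show "E (br x y) z + E z (br x y) = - (E z (br x y) - E (br x y) z) + (E y (br x z) - E (br x z) y) - (E x (br y z) - E (br y z) x)"
    by (rule lc[where c = "- (- E z (br x y) + E x (br z y) - E (br x z) y) + (- E z (br y x) + E y (br z x) - E (br y z) x) + (E z (br y x) + E z (br x y)) + (E x (br z y) + E x (br y z)) - (E y (br z x) + E y (br x z))"]) (simp add: algebra_simps, simp only: c1 c2 z1 z2 z3 add_0_left add_0_right diff_0_right diff_0 minus_zero mult_zero_right mult_zero_left diff_self)
qed

lemma X3a_bil: assumes E: "bil E" shows "bil (\<lambda>a b. E b a - E a b)"
  by (rule bilI) (simp_all add: bil_simps[OF E] algebra_simps)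

lemma X3b: assumes k: "\<kappa> \<in> sym2_inv sV br" and th: "bil \<theta>" "\<And>a. \<theta> a a = 0"
  and hyp: "\<And>x y z. \<kappa> (br x y) z = - \<theta> (br x y) z + \<theta> (br x z) y - \<theta> (br y z) x"
  and hh: "h + h = (1::'k)"
  shows "bil (\<lambda>x y. h * (\<kappa> x y - \<theta> x y))"
    and "- (h * (\<kappa> y (br x z) - \<theta> y (br x z))) + h * (\<kappa> x (br y z) - \<theta> x (br y z)) - h * (\<kappa> (br x y) z - \<theta> (br x y) z) = 0"
    and "(\<lambda>y z. h * (\<kappa> y z - \<theta> y z) + h * (\<kappa> z y - \<theta> z y)) = \<kappa>"
proof -
  have k2: "\<kappa> \<in> sym2 sV" using k by (simp add: sym2_inv_def)
  note kb = sym2_bil[OF k2]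
  show "bil (\<lambda>x y. h * (\<kappa> x y - \<theta> x y))"
    by (rule bilI) (simp_all add: bil_simps[OF kb] bil_simps[OF th(1)] algebra_simps)
  have q1: "\<kappa> y (br x z) + \<kappa> (br x y) z = 0" using inv_eq[OF k, of x y z] by simp
  have q2: "\<kappa> x (br y z) - \<kappa> (br x y) z = 0" using inv_assoc[OF k, of x y z] by simp
  have q3: "\<kappa> (br x y) z + \<theta> (br x y) z - \<theta> (br x z) y + \<theta> (br y z) x = 0" using hyp[of x y z] by simp
  have q4: "\<theta> y (br x z) + \<theta> (br x z) y = 0" using anti2[OF th, of y "br x z"] by simp
  have q5: "\<theta> x (br y z) + \<theta> (br y z) x = 0" using anti2[OF th, of x "br y z"] by simp
  show "- (h * (\<kappa> y (br x z) - \<theta> y (br x z))) + h * (\<kappa> x (br y z) - \<theta> x (br y z)) - h * (\<kappa> (br x y) z - \<theta> (br x y) z) = 0"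
    by (rule lc[where c = "- h * (\<kappa> y (br x z) + \<kappa> (br x y) z) + h * (\<kappa> x (br y z) - \<kappa> (br x y) z) + h * (\<kappa> (br x y) z + \<theta> (br x y) z - \<theta> (br x z) y + \<theta> (br y z) x) + h * (\<theta> y (br x z) + \<theta> (br x z) y) - h * (\<theta> x (br y z) + \<theta> (br y z) x)"]) (simp add: algebra_simps, simp only: q1 q2 q3 q4 q5 add_0_left add_0_right diff_0_right diff_0 minus_zero mult_zero_right mult_zero_left diff_self)
  show "(\<lambda>y z. h * (\<kappa> y z - \<theta> y z) + h * (\<kappa> z y - \<theta> z y)) = \<kappa>"
  proof (intro ext)
    fix y z
    have hh1: "h + h - 1 = 0" using hh by simp
    have s1: "\<kappa> z y - \<kappa> y z = 0" using sym2_sym[OF k2, of z y] by simp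
    have s2: "\<theta> z y + \<theta> y z = 0" using anti2[OF th, of z y] by simp
    show "h * (\<kappa> y z - \<theta> y z) + h * (\<kappa> z y - \<theta> z y) = \<kappa> y z"
      by (rule lc[where c = "(\<kappa> y z) * (h + h - 1) + h * (\<kappa> z y - \<kappa> y z) - h * (\<theta> z y + \<theta> y z)"]) (simp add: algebra_simps, simp only: hh1 s1 s2 add_0_left add_0_right diff_0_right diff_0 minus_zero mult_zero_right mult_zero_left diff_self)
  qed
qed

lemma X4a: assumes k: "\<kappa> \<in> sym2_inv sV br"
  shows "(\<lambda>x y z. \<kappa> (br x y) z) = (\<lambda>x y z. - \<kappa> y (br x z) + \<kappa> x (br y z) - \<kappa> (br x y) z)"
proof (intro ext)
  fix x y z
  have i1: "\<kappa> (br x y) z + \<kappa> y (br x z) = 0" using inv_eq[OF k, of x y z] by simp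
  have i2: "\<kappa> x (br y z) - \<kappa> (br x y) z = 0" using inv_assoc[OF k, of x y z] by simp
  show "\<kappa> (br x y) z = - \<kappa> y (br x z) + \<kappa> x (br y z) - \<kappa> (br x y) z"
    by (rule lc[where c = "(\<kappa> (br x y) z + \<kappa> y (br x z)) - (\<kappa> x (br y z) - \<kappa> (br x y) z)"]) (simp add: algebra_simps, simp only: i1 i2 add_0_left add_0_right diff_0_right diff_0 minus_zero mult_zero_right mult_zero_left diff_self)
qed

lemma X4b: assumes E: "bil E" and hF: "\<And>x y z. f x y z = - E y (br x z) + E x (br y z) - E (br x y) z"
  and alt: "\<And>x y z. f x y z + f x z y = 0" and hh: "h + h = (1::'k)"
  shows "(\<lambda>a b. h * (E a b + E b a)) \<in> sym2_inv sV br"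
    and "bil (\<lambda>a b. h * (E a b - E b a))"
    and "f x y z - h * (E (br x y) z + E z (br x y)) = - (h * (E (br x y) z - E z (br x y))) + h * (E (br x z) y - E y (br x z)) - h * (E (br y z) x - E x (br y z))"
proof -
  note bs = bil_simps[OF E]
  have A1: "(- E y (br x z) + E x (br y z) - E (br x y) z) + (- E z (br x y) + E x (br z y) - E (br x z) y) = 0" for x y z
    using alt[of x y z] unfolding hF .
  have Z1: "E x (br y z) + E x (br z y) = 0" for x y z using br_anti[of y z] bil_neg2[OF E] by simp
  show "(\<lambda>a b. h * (E a b + E b a)) \<in> sym2_inv sV br"
    unfolding sym2_inv_def
  proof (intro CollectI conjI allI)
    show "(\<lambda>a b. h * (E a b + E b a)) \<in> sym2 sV"
      unfolding sym2_iff by (auto intro!: bilI simp: bs algebra_simps)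
    fix x
    show "sym_act br x (\<lambda>a b. h * (E a b + E b a)) = 0"
    proof (intro ext)
      fix y z
      have A1': "(- E y (br x z) + E x (br y z) - E (br x y) z) + (- E z (br x y) + E x (br z y) - E (br x z) y) = 0" by (rule A1)
      have Z1': "E x (br y z) + E x (br z y) = 0" by (rule Z1)
      show "sym_act br x (\<lambda>a b. h * (E a b + E b a)) y z = 0 y z"
        unfolding sym_act_def zero_fun_def
        by (rule lc[where c = "h * ((- E y (br x z) + E x (br y z) - E (br x y) z) + (- E z (br x y) + E x (br z y) - E (br x z) y)) - h * (E x (br y z) + E x (br z y))"]) (simp add: algebra_simps, simp only: A1' Z1' add_0_left add_0_right diff_0_right diff_0 minus_zero mult_zero_right mult_zero_left diff_self)
    qed
  qed
  show "bil (\<lambda>a b. h * (E a b - E b a))"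
    by (rule bilI) (simp_all add: bs algebra_simps)
  have a1: "(- E y (br x z) + E x (br y z) - E (br x y) z) + (- E z (br x y) + E x (br z y) - E (br x z) y) = 0" by (rule A1)
  have a2: "(- E x (br y z) + E y (br x z) - E (br y x) z) + (- E z (br y x) + E y (br z x) - E (br y z) x) = 0" by (rule A1)
  have z1: "E x (br y z) + E x (br z y) = 0" by (rule Z1)
  have z2: "E y (br x z) + E y (br z x) = 0" by (rule Z1)
  have z3: "E (br y x) z + E (br x y) z = 0" using br_anti[of x y] bil_neg1[OF E] by simp
  have z4: "E z (br y x) + E z (br x y) = 0" by (rule Z1)
  have hh2: "1 - (h + h) = 0" using hh by simp
  show "f x y z - h * (E (br x y) z + E z (br x y)) = - (h * (E (br x y) z - E z (br x y))) + h * (E (br x z) y - E y (br x z)) - h * (E (br y z) x - E x (br y z))"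
    unfolding hF
    by (rule lc[where c = "h * ((- E y (br x z) + E x (br y z) - E (br x y) z) + (- E z (br x y) + E x (br z y) - E (br x z) y)) - h * (E x (br y z) + E x (br z y)) - h * ((- E x (br y z) + E y (br x z) - E (br y x) z) + (- E z (br y x) + E y (br z x) - E (br y z) x)) + h * (E y (br x z) + E y (br z x)) - h * (E (br y x) z + E (br x y) z) - h * (E z (br y x) + E z (br x y)) + (- E y (br x z) + E x (br y z) - E (br x y) z) * (1 - (h + h))"]) (simp add: algebra_simps, simp only: a1 z1 a2 z2 z3 z4 hh2 add_0_left add_0_right diff_0_right diff_0 minus_zero mult_zero_right mult_zero_left diff_self)
qed

end

context LA begin

lemma X5b:
  assumes t: "tril W" and a: "\<And>a c. W a a c = 0"
    and c: "\<And>x y z t. - W y z (br x t) + W x z (br y t) - W x y (br z t) - W (br x y) z t + W (br x z) y t - W (br y z) x t = 0"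
    and k: "\<kappa> \<in> sym2 sV"
    and hyp: "\<And>x y z. W x y z + W x z y = - \<kappa> (br x y) z - \<kappa> y (br x z)"
    and two: "(2::'k) \<noteq> 0" and hh: "h + h = 1"
    and D_def: "D = (\<lambda>x y z. - (h * \<kappa> y (br x z)) + h * \<kappa> x (br y z) - h * \<kappa> (br x y) z)"
    and g_def: "g = (\<lambda>x y z. W x y z - D x y z)"
  shows "tril g" "alt3 g" "- g (br x y) z t + g (br x z) y t - g (br y z) x t - g (br x t) y z + g (br y t) x z - g (br z t) x y = 0"
proof -
  note kb = sym2_bil[OF k]
  have Eb: "bil (\<lambda>a b. h * \<kappa> a b)" by (rule bilI) (simp_all add: bil_simps[OF kb] algebra_simps)
  have Dt: "tril D" unfolding D_def using D_tril[OF Eb] by simp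
  show tg: "tril g" unfolding g_def by (rule tril_minus[OF t Dt])
  have g1: "g x x z = 0" for x z
    unfolding g_def D_def by (simp add: a br_alt bil_zero1[OF kb])
  have g2: "g x y y = 0" for x y
  proof -
    have h0: "W x y y + W x y y = - \<kappa> (br x y) y - \<kappa> y (br x y)" by (rule hyp)
    have "(W x y y + \<kappa> (br x y) y) + (W x y y + \<kappa> (br x y) y) = 0"
      using h0 sym2_sym[OF k, of y "br x y"] by (simp add: algebra_simps)
    then have w: "W x y y + \<kappa> (br x y) y = 0" by (rule two_zero[OF two])
    have s: "\<kappa> y (br x y) - \<kappa> (br x y) y = 0" using sym2_sym[OF k, of y "br x y"] by simp
    have z0: "\<kappa> x (br y y) = 0" by (simp add: br_alt bil_zero2[OF kb])
    have hh1: "h + h - 1 = 0" using hh by simp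
    show ?thesis unfolding g_def D_def
      by (rule lc[where c = "(W x y y + \<kappa> (br x y) y) + h * (\<kappa> y (br x y) - \<kappa> (br x y) y) - h * (\<kappa> x (br y y)) + (\<kappa> (br x y) y) * (h + h - 1)"]) (simp add: algebra_simps, simp only: w s z0 hh1 add_0_left add_0_right diff_0_right diff_0 minus_zero mult_zero_right mult_zero_left diff_self)
  qed
  have ga: "g y x z = - g x y z" for x y z
  proof -
    have wa: "W y x z + W x y z = 0" using W_anti[OF t a, of y x z] by simp
    have ba: "\<kappa> (br y x) z + \<kappa> (br x y) z = 0" using br_anti[of x y] bil_neg1[OF kb] by simp
    show ?thesis unfolding g_def D_def
      by (rule lc[where c = "(W y x z + W x y z) + h * (\<kappa> (br y x) z + \<kappa> (br x y) z)"]) (simp add: algebra_simps, simp only: wa ba add_0_left add_0_right diff_0_right diff_0 minus_zero mult_zero_right mult_zero_left diff_self)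
  qed
  have g3: "g x y x = 0" for x y using ga[of y x x] g2[of y x] by simp
  show ag: "alt3 g" unfolding alt3_def using g1 g2 g3 by blast
  have cW: "- W y z (br x t) + W x z (br y t) - W x y (br z t) - W (br x y) z t + W (br x z) y t - W (br y z) x t = 0" by (rule c)
  have cD: "- D y z (br x t) + D x z (br y t) - D x y (br z t) - D (br x y) z t + D (br x z) y t - D (br y z) x t = 0"
    by (rule DD[OF Eb]) (simp add: D_def)
  have "- g y z (br x t) + g x z (br y t) - g x y (br z t) - g (br x y) z t + g (br x z) y t - g (br y z) x t = 0"
    unfolding g_def
    by (rule lc[where c = "(- W y z (br x t) + W x z (br y t) - W x y (br z t) - W (br x y) z t + W (br x z) y t - W (br y z) x t) - (- D y z (br x t) + D x z (br y t) - D x y (br z t) - D (br x y) z t + D (br x z) y t - D (br y z) x t)"]) (simp add: algebra_simps, simp only: cW cD add_0_left add_0_right diff_0_right diff_0 minus_zero mult_zero_right mult_zero_left diff_self)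
  then show "- g (br x y) z t + g (br x z) y t - g (br y z) x t - g (br x t) y z + g (br y t) x z - g (br z t) x y = 0"
    using chain_eq[OF tg ag, of x y z t] by simp
qed

end

lemma add_alpha: "additive_map (alpha_til p :: ('v list \<Rightarrow> 'k::field) \<Rightarrow> _)"
  unfolding additive_map_def alpha_til_def by (auto simp: fun_eq_iff)
lemma alpha_scale: "alpha_til p (cscale (*) a \<omega>) = cscale dual_scale a (alpha_til p (\<omega> :: 'v list \<Rightarrow> 'k::field))"
  unfolding alpha_til_def cscale_def dual_scale_def by (auto simp: fun_eq_iff)
lemma add_S: "additive_map (S_map :: ('v list \<Rightarrow> 'v \<Rightarrow> 'k::field) \<Rightarrow> _)"
  unfolding additive_map_def S_map_def by (auto simp: fun_eq_iff)
lemma S_scale: "S_map (cscale dual_scale a \<eta>) = sym_scale a (S_map (\<eta> :: 'v list \<Rightarrow> 'v \<Rightarrow> 'k::field))"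
  unfolding S_map_def cscale_def dual_scale_def sym_scale_def by (auto simp: fun_eq_iff algebra_simps)
lemma add_Gamma: "additive_map (Gamma br :: ('v \<Rightarrow> 'v \<Rightarrow> 'k::field) \<Rightarrow> _)"
  unfolding additive_map_def Gamma_def by (auto simp: fun_eq_iff)
lemma Gamma_scale: "Gamma br (sym_scale a \<kappa>) = cscale (*) a (Gamma br (\<kappa> :: 'v \<Rightarrow> 'v \<Rightarrow> 'k::field))"
  unfolding Gamma_def cscale_def sym_scale_def by (auto simp: fun_eq_iff)
lemma add_beta: "additive_map (beta2_til :: ('v list \<Rightarrow> 'v \<Rightarrow> 'k::field) \<Rightarrow> _)"
  unfolding additive_map_def beta2_til_def by (auto simp: fun_eq_iff)
lemma beta_scale: "beta2_til (cscale dual_scale a \<omega>) = cscale sym_scale a (beta2_til (\<omega> :: 'v list \<Rightarrow> 'v \<Rightarrow> 'k::field))"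
  unfolding beta2_til_def cscale_def dual_scale_def sym_scale_def by (auto simp: fun_eq_iff algebra_simps)

lemma cscale_add: "module s \<Longrightarrow> cscale s a (x + y) = cscale s a x + cscale s a y"
  by (simp add: cscale_def fun_eq_iff module.scale_right_distrib)
lemma sym_scale_add: "sym_scale a (x + y) = sym_scale a x + sym_scale a (y :: 'v \<Rightarrow> 'v \<Rightarrow> 'k::field)"
  by (simp add: sym_scale_def fun_eq_iff algebra_simps)
lemma subsp_zero: "(\<And>a. s a 0 = 0) \<Longrightarrow> subsp s {0}"
  by (simp add: subsp_def)
lemma subsp_sym0: "subsp (sym_scale :: 'k::field \<Rightarrow> ('v \<Rightarrow> 'v \<Rightarrow> 'k) \<Rightarrow> _) {0}"
  by (rule subsp_zero) (simp add: sym_scale_def fun_eq_iff)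

context LA begin

lemma cocycles_zero: "modl sM act A \<Longrightarrow> 0 \<in> cocycles sV br sM act A p"
  by (simp add: cocycles_def cochains_zero ce_diff_zero)

lemmas sT = cobound_subsp[OF modl_T] and sD = cobound_subsp[OF modl_D] and sS = cobound_subsp[OF modl_S]

lemma P1: "\<omega> \<in> Btriv sV br 2 \<Longrightarrow> alpha_til 2 \<omega> \<in> Bdual sV br 1"
proof -
  assume "\<omega> \<in> Btriv sV br 2"
  then obtain l where l: "l \<in> dual_space sV" "\<omega> = mk2 (\<lambda>x y. - l (br x y))" unfolding Bt2_iff by blast
  have "alpha_til 2 \<omega> = mk1 (\<lambda>x y. - l (br x y))" using l by (simp add: alpha_mk)
  then show ?thesis unfolding Bd1_iff using l by blast
qed

lemma P2: "\<omega> \<in> Zt 2 \<Longrightarrow> alpha_til 2 \<omega> \<in> Zd 1"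
proof -
  assume "\<omega> \<in> Zt 2"
  then obtain f where f: "\<omega> = mk2 f" "bil f" "\<And>a. f a a = 0" "\<And>x y z. - f (br x y) z + f (br x z) y - f (br y z) x = 0"
    unfolding Zt2_iff by blast
  have "alpha_til 2 \<omega> = mk1 f" using f by (simp add: alpha_mk)
  then show ?thesis unfolding Zd1_iff using f(2) F1[OF f(2,3,4)] by blast
qed

lemma P3: "\<eta> \<in> Bdual sV br 1 \<Longrightarrow> S_map \<eta> \<in> {0}"
proof -
  assume "\<eta> \<in> Bdual sV br 1"
  then obtain l where l: "l \<in> dual_space sV" "\<eta> = mk1 (\<lambda>x y. - l (br x y))" unfolding Bd1_iff by blast
  show ?thesis using F5[OF l(1)] l(2) by simp
qed

lemma P4: "\<eta> \<in> Zd 1 \<Longrightarrow> S_map \<eta> \<in> sym2_inv sV br"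
proof -
  assume "\<eta> \<in> Zd 1"
  then obtain E where E: "\<eta> = mk1 E" "bil E" "\<And>x y z. - E y (br x z) + E x (br y z) - E (br x y) z = 0"
    unfolding Zd1_iff by blast
  show ?thesis using F4[OF E(2,3)] E(1) by (simp add: S_mk)
qed

lemma Gamma0: "Gamma br (0 :: 'v \<Rightarrow> 'v \<Rightarrow> 'k) = 0"
  by (simp add: Gamma_def fun_eq_iff)

lemma P5: "\<kappa> \<in> {0} \<Longrightarrow> Gamma br \<kappa> \<in> Btriv sV br 3"
  using sT[of 3] by (simp add: Gamma0 subsp_def)

lemma P6: "\<kappa> \<in> sym2_inv sV br \<Longrightarrow> (2::'k) \<noteq> 0 \<Longrightarrow> Gamma br \<kappa> \<in> Zt 3"
proof -
  assume k: "\<kappa> \<in> sym2_inv sV br" and two: "(2::'k) \<noteq> 0"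
  have k2: "\<kappa> \<in> sym2 sV" using k by (simp add: sym2_inv_def)
  show ?thesis unfolding Gamma_mk Zt3_iff
    using F6_tril[OF k2] F6_alt[OF k two] F6_cyc[OF k] by blast
qed

lemma P7: "\<omega> \<in> Btriv sV br 3 \<Longrightarrow> alpha_til 3 \<omega> \<in> Bdual sV br 2"
proof -
  assume "\<omega> \<in> Btriv sV br 3"
  then obtain f where f: "bil f" "\<And>a. f a a = 0" "\<omega> = mk3 (\<lambda>x y z. - f (br x y) z + f (br x z) y - f (br y z) x)"
    unfolding Bt3_iff by blast
  have "alpha_til 3 \<omega> = mk2 (\<lambda>x y z. - f (br x y) z + f (br x z) y - f (br y z) x)" using f by (simp add: alpha_mk)
  also have "\<dots> = mk2 (\<lambda>x y z. - f y (br x z) + f x (br y z) - f (br x y) z)" by (simp only: F3[OF f(1,2)])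
  finally show ?thesis unfolding Bd2_iff using f(1) by blast
qed

lemma P8: "\<omega> \<in> Zt 3 \<Longrightarrow> alpha_til 3 \<omega> \<in> Zd 2"
proof -
  assume "\<omega> \<in> Zt 3"
  then obtain f where f: "\<omega> = mk3 f" "tril f" "alt3 f"
    "\<And>x y z w. - f (br x y) z w + f (br x z) y w - f (br y z) x w - f (br x w) y z + f (br y w) x z - f (br z w) x y = 0"
    unfolding Zt3_iff by blast
  have "alpha_til 3 \<omega> = mk2 f" using f by (simp add: alpha_mk)
  moreover have "\<forall>a c. f a a c = 0" using f(3) by (simp add: alt3_def)
  ultimately show ?thesis unfolding Zd2_iff using f(2) F2[OF f(2,3,4)] by blast
qed

lemma P9: "\<omega> \<in> Bdual sV br 2 \<Longrightarrow> beta2_til \<omega> \<in> Bsym sV br 1"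
proof -
  assume "\<omega> \<in> Bdual sV br 2"
  then obtain E where E: "bil E" "\<omega> = mk2 (\<lambda>x y z. - E y (br x z) + E x (br y z) - E (br x y) z)"
    unfolding Bd2_iff by blast
  have "beta2_til \<omega> = mk1 (\<lambda>x y z. (- E y (br x z) + E x (br y z) - E (br x y) z) + (- E z (br x y) + E x (br z y) - E (br x z) y))"
    using E by (simp add: beta_mk)
  also have "\<dots> = mk1 (\<lambda>x. sym_act br x (\<lambda>y z. E y z + E z y))"
    using F8[OF E(1)] by (simp add: fun_eq_iff)
  finally have "beta2_til \<omega> = mk1 (\<lambda>x. sym_act br x (\<lambda>y z. E y z + E z y))" .
  moreover have "(\<lambda>y z. E y z + E z y) \<in> sym2 sV"
    unfolding sym2_iff by (auto intro!: bilI simp: bil_simps[OF E(1)] algebra_simps)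
  ultimately show ?thesis unfolding Bs1_iff by blast
qed

lemma P10: "\<omega> \<in> Zd 2 \<Longrightarrow> beta2_til \<omega> \<in> Zs 1"
proof -
  assume "\<omega> \<in> Zd 2"
  then obtain W where W: "\<omega> = mk2 W" "tril W" "\<And>a c. W a a c = 0"
    "\<And>x y z t. - W y z (br x t) + W x z (br y t) - W x y (br z t) - W (br x y) z t + W (br x z) y t - W (br y z) x t = 0"
    unfolding Zd2_iff by blast
  have e: "beta2_til \<omega> = mk1 (\<lambda>x y z. W x y z + W x z y)" using W by (simp add: beta_mk)
  have t: "tril (\<lambda>x y z. W x y z + W x z y)" by (rule tril_plus[OF W(2) tril_swap[OF W(2)]])
  show ?thesis unfolding e Zs1_iff using t F7[OF W(2,3,4)] by (auto simp: add.commute)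
qed

end

context LA begin

lemma K1: "\<omega> \<in> Zt 2 \<Longrightarrow> alpha_til 2 \<omega> \<in> Bdual sV br 1 \<Longrightarrow> \<omega> \<in> Btriv sV br 2"
proof -
  assume "\<omega> \<in> Zt 2" and b: "alpha_til 2 \<omega> \<in> Bdual sV br 1"
  then obtain f where f: "\<omega> = mk2 f" "bil f" "\<And>a. f a a = 0" unfolding Zt2_iff by blast
  have "alpha_til 2 \<omega> = mk1 f" using f by (simp add: alpha_mk)
  then obtain l where l: "l \<in> dual_space sV" "mk1 f = mk1 (\<lambda>x y. - l (br x y))" using b unfolding Bd1_iff by auto
  then have "f = (\<lambda>x y. - l (br x y))" by (simp add: mk1_eq)
  then show ?thesis unfolding Bt2_iff using f(1) l(1) by blast
qed

lemma K2comp: "\<omega> \<in> Zt 2 \<Longrightarrow> S_map (alpha_til 2 \<omega>) \<in> {0}"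
proof -
  assume "\<omega> \<in> Zt 2"
  then obtain f where f: "\<omega> = mk2 f" "bil f" "\<And>a. f a a = 0" unfolding Zt2_iff by blast
  have "S_map (alpha_til 2 \<omega>) = (\<lambda>y z. f y z + f z y)" using f by (simp add: alpha_mk S_mk)
  also have "\<dots> = 0"
  proof (intro ext)
    fix y z
    have "f z y = - f y z" by (rule anti2[OF f(2,3)])
    then show "f y z + f z y = 0 y z" by simp
  qed
  finally show ?thesis by simp
qed

lemma K2ker: assumes w: "\<eta> \<in> Zd 1" and s: "S_map \<eta> \<in> {0}" and two: "(2::'k) \<noteq> 0"
  shows "\<exists>\<omega>\<in>Zt 2. \<eta> - alpha_til 2 \<omega> \<in> Bdual sV br 1"
proof -
  obtain E where E: "\<eta> = mk1 E" "bil E" "\<And>x y z. - E y (br x z) + E x (br y z) - E (br x y) z = 0"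
    using w unfolding Zd1_iff by blast
  have s0: "(\<lambda>y z. E y z + E z y) = 0" using s E(1) by (simp add: S_mk)
  have an: "E y z + E z y = 0" for y z using fun_cong[OF fun_cong[OF s0, of y], of z] by simp
  have aa: "E a a = 0" for a using two_zero[OF two an[of a a]] .
  have cond: "- E (br x y) z + E (br x z) y - E (br y z) x = 0" for x y z
  proof -
    have c0: "- E y (br x z) + E x (br y z) - E (br x y) z = 0" by (rule E(3))
    have s1: "E (br x z) y + E y (br x z) = 0" by (rule an)
    have s2: "E (br y z) x + E x (br y z) = 0" by (rule an)
    show ?thesis
      by (rule lc[where c = "(- E y (br x z) + E x (br y z) - E (br x y) z) + (E (br x z) y + E y (br x z)) - (E (br y z) x + E x (br y z))"])
         (simp add: algebra_simps, simp only: c0 s1 s2 add_0_left add_0_right diff_0_right diff_0 minus_zero diff_self)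
  qed
  have m: "mk2 E \<in> Zt 2" unfolding Zt2_iff using E(2) aa cond by blast
  have e: "\<eta> - alpha_til 2 (mk2 E) = 0" using E(1) by (simp add: alpha_mk)
  have z: "0 \<in> Bdual sV br 1" using sD[of 1] by (simp add: subsp_def)
  show ?thesis using e z by (intro bexI[OF _ m]) simp
qed

lemma K3comp: "\<eta> \<in> Zd 1 \<Longrightarrow> Gamma br (S_map \<eta>) \<in> Btriv sV br 3"
proof -
  assume "\<eta> \<in> Zd 1"
  then obtain E where E: "\<eta> = mk1 E" "bil E" "\<And>x y z. - E y (br x z) + E x (br y z) - E (br x y) z = 0"
    unfolding Zd1_iff by blast
  have "Gamma br (S_map \<eta>) = mk3 (\<lambda>x y z. E (br x y) z + E z (br x y))" using E(1) by (simp add: S_mk Gamma_mk)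
  also have "\<dots> = mk3 (\<lambda>x y z. - (E z (br x y) - E (br x y) z) + (E y (br x z) - E (br x z) y) - (E x (br y z) - E (br y z) x))"
    by (simp only: X3a[OF E(2,3)])
  finally have e: "Gamma br (S_map \<eta>) = mk3 (\<lambda>x y z. - (E z (br x y) - E (br x y) z) + (E y (br x z) - E (br x z) y) - (E x (br y z) - E (br y z) x))" .
  show ?thesis unfolding Bt3_iff e
    by (rule exI[where x="\<lambda>a b. E b a - E a b"]) (simp add: X3a_bil[OF E(2)])
qed

lemma K3ker: assumes k: "\<kappa> \<in> sym2_inv sV br" and g: "Gamma br \<kappa> \<in> Btriv sV br 3" and two: "(2::'k) \<noteq> 0"
  shows "\<exists>\<eta>\<in>Zd 1. \<kappa> - S_map \<eta> \<in> {0}"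
proof -
  obtain \<theta> where th: "bil \<theta>" "\<And>a. \<theta> a a = 0"
    "Gamma br \<kappa> = mk3 (\<lambda>x y z. - \<theta> (br x y) z + \<theta> (br x z) y - \<theta> (br y z) x)"
    using g unfolding Bt3_iff by blast
  have e: "(\<lambda>x y z. \<kappa> (br x y) z) = (\<lambda>x y z. - \<theta> (br x y) z + \<theta> (br x z) y - \<theta> (br y z) x)"
    using th(3) unfolding Gamma_mk mk3_eq .
  have hyp: "\<kappa> (br x y) z = - \<theta> (br x y) z + \<theta> (br x z) y - \<theta> (br y z) x" for x y z
    using fun_cong[OF fun_cong[OF fun_cong[OF e, of x], of y], of z] by simp
  define h :: 'k where "h = inverse 2"
  have hh: "h + h = 1" unfolding h_def by (rule half[OF two])
  note X = X3b[OF k th(1,2) hyp hh]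
  let ?\<eta> = "mk1 (\<lambda>x y. h * (\<kappa> x y - \<theta> x y))"
  have m: "?\<eta> \<in> Zd 1" unfolding Zd1_iff using X(1) X(2) by blast
  have "S_map ?\<eta> = \<kappa>" using X(3) by (simp add: S_mk)
  then show ?thesis by (intro bexI[OF _ m]) simp
qed

lemma K4comp: "\<kappa> \<in> sym2_inv sV br \<Longrightarrow> alpha_til 3 (Gamma br \<kappa>) \<in> Bdual sV br 2"
proof -
  assume k: "\<kappa> \<in> sym2_inv sV br"
  have k2: "\<kappa> \<in> sym2 sV" using k by (simp add: sym2_inv_def)
  have "alpha_til 3 (Gamma br \<kappa>) = mk2 (\<lambda>x y z. \<kappa> (br x y) z)" by (simp add: Gamma_mk alpha_mk)
  also have "\<dots> = mk2 (\<lambda>x y z. - \<kappa> y (br x z) + \<kappa> x (br y z) - \<kappa> (br x y) z)" by (simp only: X4a[OF k])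
  finally show ?thesis unfolding Bd2_iff using sym2_bil[OF k2] by blast
qed

lemma K4ker: assumes w: "\<omega> \<in> Zt 3" and b: "alpha_til 3 \<omega> \<in> Bdual sV br 2" and two: "(2::'k) \<noteq> 0"
  shows "\<exists>\<kappa>\<in>sym2_inv sV br. \<omega> - Gamma br \<kappa> \<in> Btriv sV br 3"
proof -
  obtain f where f: "\<omega> = mk3 f" "tril f" "alt3 f" using w unfolding Zt3_iff by blast
  have "alpha_til 3 \<omega> = mk2 f" using f by (simp add: alpha_mk)
  then obtain E where E: "bil E" "mk2 f = mk2 (\<lambda>x y z. - E y (br x z) + E x (br y z) - E (br x y) z)"
    using b unfolding Bd2_iff by auto
  have "f = (\<lambda>x y z. - E y (br x z) + E x (br y z) - E (br x y) z)" using E(2) unfolding mk2_eq .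
  then have hF: "f x y z = - E y (br x z) + E x (br y z) - E (br x y) z" for x y z by simp
  have alt: "f x y z + f x z y = 0" for x y z using alt3_23[OF f(2,3), of x y z] by simp
  define h :: 'k where "h = inverse 2"
  have hh: "h + h = 1" unfolding h_def by (rule half[OF two])
  note X = X4b[OF E(1) hF alt hh]
  let ?\<kappa> = "\<lambda>a b. h * (E a b + E b a)"
  have "\<omega> - Gamma br ?\<kappa> = mk3 (\<lambda>x y z. f x y z - h * (E (br x y) z + E z (br x y)))"
    using f(1) by (simp add: Gamma_mk mk3_minus)
  also have "\<dots> = mk3 (\<lambda>x y z. - (h * (E (br x y) z - E z (br x y))) + h * (E (br x z) y - E y (br x z)) - h * (E (br y z) x - E x (br y z)))"
    using X(3) by simp
  finally have e: "\<omega> - Gamma br ?\<kappa> = \<dots>" .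
  have "\<omega> - Gamma br ?\<kappa> \<in> Btriv sV br 3" unfolding Bt3_iff e
    by (rule exI[where x="\<lambda>a b. h * (E a b - E b a)"]) (simp add: X(2))
  then show ?thesis using X(1) by blast
qed

lemma K5comp: "\<omega> \<in> Zt 3 \<Longrightarrow> beta2_til (alpha_til 3 \<omega>) \<in> Bsym sV br 1"
proof -
  assume "\<omega> \<in> Zt 3"
  then obtain f where f: "\<omega> = mk3 f" "tril f" "alt3 f" unfolding Zt3_iff by blast
  have "beta2_til (alpha_til 3 \<omega>) = mk1 (\<lambda>x y z. f x y z + f x z y)" using f by (simp add: alpha_mk beta_mk)
  also have "\<dots> = 0"
  proof -
    have z: "f x y z + f x z y = 0" for x y z using alt3_23[OF f(2,3), of x y z] by simp
    show ?thesis by (simp add: z mk1_def fun_eq_iff)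
  qed
  finally show ?thesis using sS[of 1] by (simp add: subsp_def)
qed

lemma K5ker: assumes w: "\<omega> \<in> Zd 2" and b: "beta2_til \<omega> \<in> Bsym sV br 1" and two: "(2::'k) \<noteq> 0"
  shows "\<exists>\<theta>\<in>Zt 3. \<omega> - alpha_til 3 \<theta> \<in> Bdual sV br 2"
proof -
  obtain W where W: "\<omega> = mk2 W" "tril W" "\<And>a c. W a a c = 0"
    "\<And>x y z t. - W y z (br x t) + W x z (br y t) - W x y (br z t) - W (br x y) z t + W (br x z) y t - W (br y z) x t = 0"
    using w unfolding Zd2_iff by blast
  have "beta2_til \<omega> = mk1 (\<lambda>x y z. W x y z + W x z y)" using W by (simp add: beta_mk)
  then obtain \<kappa> where k: "\<kappa> \<in> sym2 sV" "mk1 (\<lambda>x y z. W x y z + W x z y) = mk1 (\<lambda>x. sym_act br x \<kappa>)"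
    using b unfolding Bs1_iff by auto
  have e: "(\<lambda>x y z. W x y z + W x z y) = (\<lambda>x. sym_act br x \<kappa>)" using k(2) unfolding mk1_eq .
  have hyp: "W x y z + W x z y = - \<kappa> (br x y) z - \<kappa> y (br x z)" for x y z
    using fun_cong[OF fun_cong[OF fun_cong[OF e, of x], of y], of z] by (simp add: sym_act_def)
  define h :: 'k where "h = inverse 2"
  have hh: "h + h = 1" unfolding h_def by (rule half[OF two])
  define D where "D = (\<lambda>x y z. - (h * \<kappa> y (br x z)) + h * \<kappa> x (br y z) - h * \<kappa> (br x y) z)"
  define g where "g = (\<lambda>x y z. W x y z - D x y z)"
  note X = X5b[OF W(2,3,4) k(1) hyp two hh D_def g_def]
  have "mk3 g \<in> Zt 3" unfolding Zt3_iff using X by blast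
  moreover have "\<omega> - alpha_til 3 (mk3 g) = mk2 (\<lambda>x y z. - (\<lambda>a b. h * \<kappa> a b) y (br x z) + (\<lambda>a b. h * \<kappa> a b) x (br y z) - (\<lambda>a b. h * \<kappa> a b) (br x y) z)"
  proof -
    have "\<omega> - alpha_til 3 (mk3 g) = mk2 W - mk2 (\<lambda>a b. g a b)" using W(1) by (simp only: alpha_mk)
    also have "\<dots> = mk2 (\<lambda>a b. W a b - g a b)" by (rule mk2_minus)
    also have "\<dots> = mk2 (\<lambda>x y z. - (\<lambda>a b. h * \<kappa> a b) y (br x z) + (\<lambda>a b. h * \<kappa> a b) x (br y z) - (\<lambda>a b. h * \<kappa> a b) (br x y) z)"
      by (rule arg_cong[where f=mk2]) (simp add: g_def D_def fun_eq_iff)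
    finally show ?thesis .
  qed
  moreover have "bil (\<lambda>a b. h * \<kappa> a b)"
    by (rule bilI) (simp_all add: bil_simps[OF sym2_bil[OF k(1)]] algebra_simps)
  ultimately show ?thesis unfolding Bd2_iff by blast
qed

end

context LA begin


lemma C1: "well_defined_linear (cscale (*)) (Btriv sV br 2) (Htriv sV br 2)
        (cscale dual_scale) (Bdual sV br 1) (Hdual sV br 1) (alpha_til 2)"
proof -
  have FB: "alpha_til 2 ` Btriv sV br 2 \<subseteq> Bdual sV br 1" using P1 by blast
  have FZ: "alpha_til 2 ` Zt 2 \<subseteq> Zd 1" using P2 by blast
  show ?thesis
    unfolding cohomology_def
    by (rule WDL[OF sT sD cscale_add[OF mod_K] cscale_add[OF mod_D] add_alpha alpha_scale FB FZ])
qed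

lemma C2: "well_defined_linear (cscale dual_scale) (Bdual sV br 1) (Hdual sV br 1)
        sym_scale {0} (Sinv sV br) S_map"
proof -
  have FB: "S_map ` Bdual sV br 1 \<subseteq> {0}" using P3 by blast
  have FZ: "S_map ` Zd 1 \<subseteq> sym2_inv sV br" using P4 by blast
  show ?thesis
    unfolding cohomology_def
    by (rule WDL[OF sD subsp_sym0 cscale_add[OF mod_D] sym_scale_add add_S S_scale FB FZ])
qed

lemma C3: assumes two: "(2::'k) \<noteq> 0" shows "well_defined_linear sym_scale {0} (Sinv sV br)
        (cscale (*)) (Btriv sV br 3) (Htriv sV br 3) (Gamma br)"
proof -
  have FB: "Gamma br ` {0} \<subseteq> Btriv sV br 3" using P5 by blast
  have FZ: "Gamma br ` sym2_inv sV br \<subseteq> Zt 3" using P6 two by blast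
  show ?thesis
    unfolding cohomology_def
    by (rule WDL[OF subsp_sym0 sT sym_scale_add cscale_add[OF mod_K] add_Gamma Gamma_scale FB FZ])
qed

lemma C4: "well_defined_linear (cscale (*)) (Btriv sV br 3) (Htriv sV br 3)
        (cscale dual_scale) (Bdual sV br 2) (Hdual sV br 2) (alpha_til 3)"
proof -
  have FB: "alpha_til 3 ` Btriv sV br 3 \<subseteq> Bdual sV br 2" using P7 by blast
  have FZ: "alpha_til 3 ` Zt 3 \<subseteq> Zd 2" using P8 by blast
  show ?thesis
    unfolding cohomology_def
    by (rule WDL[OF sT sD cscale_add[OF mod_K] cscale_add[OF mod_D] add_alpha alpha_scale FB FZ])
qed

lemma C5: "well_defined_linear (cscale dual_scale) (Bdual sV br 2) (Hdual sV br 2)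
        (cscale sym_scale) (Bsym sV br 1) (Hsym sV br 1) beta2_til"
proof -
  have FB: "beta2_til ` Bdual sV br 2 \<subseteq> Bsym sV br 1" using P9 by blast
  have FZ: "beta2_til ` Zd 2 \<subseteq> Zs 1" using P10 by blast
  show ?thesis
    unfolding cohomology_def
    by (rule WDL[OF sD sS cscale_add[OF mod_D] cscale_add[OF mod_S] add_beta beta_scale FB FZ])
qed

lemma C6: "{c \<in> Htriv sV br 2. qmap (alpha_til 2) (Bdual sV br 1) c = coset (Bdual sV br 1) 0}
       = {coset (Btriv sV br 2) 0}"
  unfolding cohomology_def
  by (rule INJ[OF sT sD add_alpha _ cocycles_zero[OF modl_T]]) (use P1 K1 in blast)+

lemma C7: "(2::'k) \<noteq> 0 \<Longrightarrow> exact_at (Htriv sV br 2) (alpha_til 2) (Bdual sV br 1) (Hdual sV br 1) S_map {0}"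
  unfolding cohomology_def
  by (rule EXACT[OF sT sD subsp_sym0 add_alpha _ add_S]) (use P1 P3 P2 K2comp K2ker in blast)+

lemma C8: "(2::'k) \<noteq> 0 \<Longrightarrow> exact_at (Hdual sV br 1) S_map {0} (Sinv sV br) (Gamma br) (Btriv sV br 3)"
  unfolding cohomology_def
  by (rule EXACT[OF sD subsp_sym0 sT add_S _ add_Gamma]) (use P3 P5 P4 K3comp K3ker in blast)+

lemma C9: "(2::'k) \<noteq> 0 \<Longrightarrow> exact_at (Sinv sV br) (Gamma br) (Btriv sV br 3) (Htriv sV br 3)
        (alpha_til 3) (Bdual sV br 2)"
  unfolding cohomology_def
  by (rule EXACT[OF subsp_sym0 sT sD add_Gamma _ add_alpha]) (use P5 P7 P6 K4comp K4ker in blast)+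

lemma C10: "(2::'k) \<noteq> 0 \<Longrightarrow> exact_at (Htriv sV br 3) (alpha_til 3) (Bdual sV br 2) (Hdual sV br 2)
        beta2_til (Bsym sV br 1)"
  unfolding cohomology_def
  by (rule EXACT[OF sT sD sS add_alpha _ add_beta]) (use P7 P9 P8 K5comp K5ker in blast)+

end

theorem proposition7p2:
  fixes sV :: "'k::field \<Rightarrow> 'v::ab_group_add \<Rightarrow> 'v"
    and br :: "'v \<Rightarrow> 'v \<Rightarrow> 'v"
  assumes "lie_algebra sV br"
    and "(2::'k) \<noteq> 0"
  shows
    "well_defined_linear (cscale (*)) (Btriv sV br 2) (Htriv sV br 2)
        (cscale dual_scale) (Bdual sV br 1) (Hdual sV br 1) (alpha_til 2)
   \<and> well_defined_linear (cscale dual_scale) (Bdual sV br 1) (Hdual sV br 1)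
        sym_scale {0} (Sinv sV br) S_map
   \<and> well_defined_linear sym_scale {0} (Sinv sV br)
        (cscale (*)) (Btriv sV br 3) (Htriv sV br 3) (Gamma br)
   \<and> well_defined_linear (cscale (*)) (Btriv sV br 3) (Htriv sV br 3)
        (cscale dual_scale) (Bdual sV br 2) (Hdual sV br 2) (alpha_til 3)
   \<and> well_defined_linear (cscale dual_scale) (Bdual sV br 2) (Hdual sV br 2)
        (cscale sym_scale) (Bsym sV br 1) (Hsym sV br 1) beta2_til
   \<and> {c \<in> Htriv sV br 2. qmap (alpha_til 2) (Bdual sV br 1) c = coset (Bdual sV br 1) 0}
       = {coset (Btriv sV br 2) 0}
   \<and> exact_at (Htriv sV br 2) (alpha_til 2) (Bdual sV br 1) (Hdual sV br 1) S_map {0}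
   \<and> exact_at (Hdual sV br 1) S_map {0} (Sinv sV br) (Gamma br) (Btriv sV br 3)
   \<and> exact_at (Sinv sV br) (Gamma br) (Btriv sV br 3) (Htriv sV br 3)
        (alpha_til 3) (Bdual sV br 2)
   \<and> exact_at (Htriv sV br 3) (alpha_til 3) (Bdual sV br 2) (Hdual sV br 2)
        beta2_til (Bsym sV br 1)"
proof -
  interpret LA sV br by (unfold_locales) (rule assms(1))
  show ?thesis using C1 C2 C3[OF assms(2)] C4 C5 C6 C7[OF assms(2)] C8[OF assms(2)] C9[OF assms(2)] C10[OF assms(2)]
    by blast
qed

end
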